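(* For each $j=0,\dots,4$, $P\Gamma^{\mathbb{R}}_j\cong PO(\Psi_j)$, where $O(\Psi_j)$ is the group of automorphisms of $\mathbb{Z}^5$ preserving the quadratic form $\Psi_j$ and $PO(\Psi_j)=O(\Psi_j)/\{\pm1\}$, with $\Psi_j(y_0,\dots,y_4)=-y_0^2+\sum_{i=1}^{4-j}y_i^2+3\sum_{i=5-j}^{4}y_i^2$ (so $j$ of the coefficients of $y_1^2,\dots,y_4^2$, namely the last $j$, equal $3$ and the others equal $1$).
   Context: Let $\omega=e^{2\pi i/3}$, $\mathcal{E}=\mathbb{Z}[\omega]$, $\theta=\sqrt{-3}$. Let $\Lambda=\mathcal{E}^5$ with Hermitian form $h(x,y)=-x_0\bar y_0+x_1\bar y_1+\dots+x_4\bar y_4$, let $\Gamma$ be its group of $\mathcal{E}$-linear isometries, and $P\Gamma=\Gamma/\{\text{unit scalars}\}$. Complex hyperbolic space $\mathbb{C}H^4$ is the set of $h$-negative lines in $\mathbb{C}^5=\Lambda\otimes_{\mathcal{E}}\mathbb{C}$, on which $P\Gamma$ acts. For $j=0,\dots,4$ let $\xi_j$ be the antilinear map $(x_0,\dots,x_4)\mapsto(\bar x_0,\dots,\bar x_{4-j},-\bar x_{5-j},\dots,-\bar x_4)$ (conjugate all coordinates, negate the last $j$), let $H^4_j$ be its fixed-point set in $\mathbb{C}H^4$ (a copy of real hyperbolic $4$-space), and let $P\Gamma^{\mathbb{R}}_j$ be the stabilizer of $H^4_j$ in $P\Gamma$. *)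

theory Defs
  imports Complex_Main "Jordan_Normal_Form.Matrix" "HOL-Algebra.Coset"
begin

definition omega :: complex where
  "omega = cis (2 * pi / 3)"

definition Eis :: "complex set" where
  "Eis = {of_int a + of_int b * omega | a b. True}"

definition Eis_units :: "complex set" where
  "Eis_units = {u \<in> Eis. \<exists>v \<in> Eis. u * v = 1}"

definition herm :: "complex vec \<Rightarrow> complex vec \<Rightarrow> complex" where
  "herm x y = (\<Sum>i<5. (if i = 0 then -1 else 1) * x $ i * cnj (y $ i))"

definition Lambda :: "complex vec set" where
  "Lambda = {x \<in> carrier_vec 5. \<forall>i<5. x $ i \<in> Eis}"

text \<open>\<open>\<E>\<close>-linear maps \<open>\<Lambda> \<rightarrow> \<Lambda>\<close> are given by 5x5 matrices with entries in \<open>\<E>\<close>.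
  \<open>\<Gamma>\<close> is the group of those which are bijective on \<open>\<Lambda>\<close> (inverse also over \<open>\<E>\<close>)
  and preserve \<open>h\<close>.\<close>
definition Eis_mat :: "complex mat set" where
  "Eis_mat = {M \<in> carrier_mat 5 5. \<forall>i<5. \<forall>k<5. M $$ (i, k) \<in> Eis}"

definition Gamma_carrier :: "complex mat set" where
  "Gamma_carrier = {M \<in> Eis_mat.
      (\<exists>N \<in> Eis_mat. N * M = 1\<^sub>m 5 \<and> M * N = 1\<^sub>m 5) \<and>
      (\<forall>x \<in> Lambda. \<forall>y \<in> Lambda. herm (M *\<^sub>v x) (M *\<^sub>v y) = herm x y)}"

definition Gamma :: "complex mat monoid" where
  "Gamma = \<lparr>carrier = Gamma_carrier, mult = (*), one = 1\<^sub>m 5\<rparr>"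

definition unit_scalars :: "complex mat set" where
  "unit_scalars = {u \<cdot>\<^sub>m 1\<^sub>m 5 | u. u \<in> Eis_units}"

definition PGamma :: "complex mat set monoid" where
  "PGamma = Gamma Mod unit_scalars"

definition cline :: "complex vec \<Rightarrow> complex vec set" where
  "cline v = {c \<cdot>\<^sub>v v | c. True}"

definition CH4 :: "complex vec set set" where
  "CH4 = {cline v | v. v \<in> carrier_vec 5 \<and> Re (herm v v) < 0}"

definition xi :: "nat \<Rightarrow> complex vec \<Rightarrow> complex vec" where
  "xi j x = vec 5 (\<lambda>i. if i < 5 - j then cnj (x $ i) else - cnj (x $ i))"

definition H4 :: "nat \<Rightarrow> complex vec set set" where
  "H4 j = {L \<in> CH4. xi j ` L = L}"

definition act_line :: "complex mat \<Rightarrow> complex vec set \<Rightarrow> complex vec set" where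
  "act_line M L = (\<lambda>x. M *\<^sub>v x) ` L"

text \<open>Stabilizer of \<open>H^4_j\<close> in \<open>P\<Gamma>\<close> (an element is a coset of unit scalars; all its
  representatives act identically on lines).\<close>
definition PGammaR :: "nat \<Rightarrow> complex mat set monoid" where
  "PGammaR j = PGamma\<lparr>carrier := {C \<in> carrier PGamma.
      \<forall>M \<in> C. act_line M ` H4 j = H4 j}\<rparr>"

definition psi_coeff :: "nat \<Rightarrow> nat \<Rightarrow> int" where
  "psi_coeff j i = (if i = 0 then -1 else if i < 5 - j then 1 else 3)"

definition Psi :: "nat \<Rightarrow> int vec \<Rightarrow> int" where
  "Psi j y = (\<Sum>i<5. psi_coeff j i * (y $ i)^2)"

definition O_Psi :: "nat \<Rightarrow> int mat monoid" where
  "O_Psi j = \<lparr>carrier = {M \<in> carrier_mat 5 5.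
      (\<exists>N \<in> carrier_mat 5 5. N * M = 1\<^sub>m 5 \<and> M * N = 1\<^sub>m 5) \<and>
      (\<forall>y \<in> carrier_vec 5. Psi j (M *\<^sub>v y) = Psi j y)},
    mult = (*), one = 1\<^sub>m 5\<rparr>"

definition PO_Psi :: "nat \<Rightarrow> int mat set monoid" where
  "PO_Psi j = O_Psi j Mod {1\<^sub>m 5, (-1) \<cdot>\<^sub>m 1\<^sub>m 5}"

end

theory Submission
  imports Defs "Jordan_Normal_Form.Determinant"
begin


lemma omega_eq: "omega = Complex (-1/2) (sqrt 3 / 2)"
  unfolding omega_def cis.ctr using cos_120 sin_120 by simp

lemma omega_sq: "omega * omega = -1 - omega"
  by (simp add: omega_eq complex_eq_iff field_simps) 
lemma cnj_omega: "cnj omega = -1 - omega"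
  by (simp add: omega_eq complex_eq_iff)

definition theta :: complex where "theta = Complex 0 (sqrt 3)"

lemma theta_sq: "theta * theta = -3"
  by (simp add: theta_def complex_eq_iff)
lemma cnj_theta: "cnj theta = - theta"
  by (simp add: theta_def complex_eq_iff)
lemma theta_nz: "theta \<noteq> 0" by (simp add: theta_def complex_eq_iff)
lemma theta_omega: "theta = 1 + 2 * omega"
  by (simp add: theta_def omega_eq complex_eq_iff)

lemma Eis_iff: "z \<in> Eis \<longleftrightarrow> (\<exists>a b. z = of_int a + of_int b * omega)"
  unfolding Eis_def by auto

lemma Eis_add: "z \<in> Eis \<Longrightarrow> w \<in> Eis \<Longrightarrow> z + w \<in> Eis"
proof -
  assume "z \<in> Eis" "w \<in> Eis"
  then obtain a b c d where "z = of_int a + of_int b * omega" "w = of_int c + of_int d * omega"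
    unfolding Eis_iff by blast
  then have "z + w = of_int (a+c) + of_int (b+d) * omega" by (simp add: algebra_simps)
  then show ?thesis unfolding Eis_iff by blast
qed

lemma Eis_mult: "z \<in> Eis \<Longrightarrow> w \<in> Eis \<Longrightarrow> z * w \<in> Eis"
proof -
  assume "z \<in> Eis" "w \<in> Eis"
  then obtain a b c d where zw: "z = of_int a + of_int b * omega" "w = of_int c + of_int d * omega"
    unfolding Eis_iff by blast
  have "z * w = of_int a * of_int c + (of_int a * of_int d + of_int b * of_int c) * omega
       + of_int b * of_int d * (omega * omega)" by (simp add: zw algebra_simps)
  also have "\<dots> = of_int (a*c - b*d) + of_int (a*d+b*c-b*d) * omega"
    by (simp add: omega_sq algebra_simps)
  finally show ?thesis unfolding Eis_iff by blast
qed

lemma Eis_uminus: "z \<in> Eis \<Longrightarrow> - z \<in> Eis"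
proof -
  assume "z \<in> Eis"
  then obtain a b where "z = of_int a + of_int b * omega" unfolding Eis_iff by blast
  then have "-z = of_int (-a) + of_int (-b) * omega" by simp
  then show ?thesis unfolding Eis_iff by blast
qed

lemma Eis_diff: "z \<in> Eis \<Longrightarrow> w \<in> Eis \<Longrightarrow> z - w \<in> Eis"
  using Eis_add[of z "-w"] Eis_uminus[of w] by simp

lemma Eis_cnj: "z \<in> Eis \<Longrightarrow> cnj z \<in> Eis"
proof -
  assume "z \<in> Eis"
  then obtain a b where "z = of_int a + of_int b * omega" unfolding Eis_iff by blast
  then have "cnj z = of_int (a-b) + of_int (-b) * omega" by (simp add: cnj_omega algebra_simps)
  then show ?thesis unfolding Eis_iff by blast
qed

lemma Eis_int: "of_int n \<in> Eis"
  unfolding Eis_iff by (rule exI[of _ n], rule exI[of _ 0]) simp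
lemma Eis_0: "0 \<in> Eis" using Eis_int[of 0] by simp
lemma Eis_1: "1 \<in> Eis" using Eis_int[of 1] by simp
lemma Eis_theta: "theta \<in> Eis"
  unfolding Eis_iff theta_omega by (rule exI[of _ 1], rule exI[of _ 2]) simp
lemma Eis_omega: "omega \<in> Eis"
  unfolding Eis_iff by (rule exI[of _ 0], rule exI[of _ 1]) simp

lemma Eis_sum: "(\<And>i. i \<in> A \<Longrightarrow> f i \<in> Eis) \<Longrightarrow> sum f A \<in> Eis"
  by (induction A rule: infinite_finite_induct) (auto intro: Eis_add Eis_0)

lemma Eis_real: "z \<in> Eis \<Longrightarrow> cnj z = z \<Longrightarrow> \<exists>n. z = of_int n"
proof -
  assume "z \<in> Eis" "cnj z = z"
  then obtain a b where z: "z = of_int a + of_int b * omega" unfolding Eis_iff by blast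
  have "Im (cnj z) = Im z" using \<open>cnj z = z\<close> by simp
  then have "Im z = 0" by simp
  then have "b = 0" using z by (simp add: omega_eq)
  then show ?thesis using z by simp
qed

lemma Eis_imag: "z \<in> Eis \<Longrightarrow> cnj z = - z \<Longrightarrow> \<exists>n. z = of_int n * theta"
proof -
  assume "z \<in> Eis" "cnj z = - z"
  then obtain a b where z: "z = of_int a + of_int b * omega" unfolding Eis_iff by blast
  have "Re (cnj z) = Re (- z)" using \<open>cnj z = - z\<close> by simp
  then have "Re z = 0" by simp
  then have "b = 2 * a" using z by (simp add: omega_eq)
  then show ?thesis using z by (intro exI[of _ a]) (simp add: theta_omega algebra_simps)
qed

lemma Eis_normsq: "z \<in> Eis \<Longrightarrow> \<exists>n. z * cnj z = of_int n \<and> n \<ge> 0"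
proof -
  assume "z \<in> Eis"
  then obtain a b where z: "z = of_int a + of_int b * omega" unfolding Eis_iff by blast
  have "z * cnj z = of_int (a*a - a*b + b*b)"
    by (simp add: z omega_eq complex_eq_iff algebra_simps power2_eq_square)
  moreover have "a*a - a*b + b*b \<ge> 0"
  proof -
    define N where "N = a*a - a*b + b*b"
    have "4*N = (2*a-b)^2 + 3*b^2" unfolding N_def by (simp add: algebra_simps power2_eq_square)
    moreover have "(2*a-b)^2 + 3*b^2 \<ge> 0" by simp
    ultimately show ?thesis unfolding N_def[symmetric] by linarith
  qed
  ultimately show ?thesis by blast
qed

lemma Eis_units_cases:
  assumes "u \<in> Eis_units"
  shows "u = 1 \<or> u = -1 \<or> u = omega \<or> u = - omega \<or> u = -1 - omega \<or> u = 1 + omega"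
proof -
  obtain v where u: "u \<in> Eis" and v: "v \<in> Eis" and uv: "u * v = 1"
    using assms unfolding Eis_units_def by blast
  obtain a b where z: "u = of_int a + of_int b * omega" using u unfolding Eis_iff by blast
  have nu: "u * cnj u = of_int (a*a - a*b + b*b)"
    by (simp add: z omega_eq complex_eq_iff algebra_simps power2_eq_square)
  obtain m where m: "v * cnj v = of_int m" "m \<ge> 0" using Eis_normsq[OF v] by blast
  have "(u * cnj u) * (v * cnj v) = (u*v) * cnj (u * v)" by (simp add: algebra_simps)
  also have "\<dots> = 1" using uv by simp
  finally have "of_int ((a*a - a*b + b*b) * m) = (1::complex)" using nu m by simp
  then have "(a*a - a*b + b*b) * m = 1" using of_int_eq_1_iff by blast
  moreover have "a*a - a*b + b*b \<ge> 0"
  proof -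
    define N where "N = a*a - a*b + b*b"
    have "4*N = (2*a-b)^2 + 3*b^2" unfolding N_def by (simp add: algebra_simps power2_eq_square)
    moreover have "(2*a-b)^2 + 3*b^2 \<ge> 0" by simp
    ultimately show ?thesis unfolding N_def[symmetric] by linarith
  qed
  ultimately have N1: "a*a - a*b + b*b = 1" using m(2) by (auto simp: zmult_eq_1_iff)
  have h4: "(2*a-b)^2 + 3*b^2 = 4" using N1 by (simp add: algebra_simps power2_eq_square)
  have "b^2 \<le> 1" using h4 zero_le_power2[of "2*a-b"] by linarith
  then have "\<bar>b\<bar> \<le> 1" using abs_square_le_1 by blast
  then have b: "b \<in> {-1,0,1}" by auto
  have "(2*a-b)^2 \<le> 4" using h4 zero_le_power2[of b] by linarith
  then have "\<bar>2*a-b\<bar> \<le> 2" using power2_le_iff_abs_le[of 2 "2*a-b"] by simp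
  then have a: "a \<in> {-1,0,1}" using b by auto
  show ?thesis using a b N1 z by (auto simp: algebra_simps)
qed

lemma Eis_unit_half:
  assumes "u \<in> Eis_units"
  shows "\<exists>t. t \<in> Eis_units \<and> (t*t = u \<or> t*t = -u)"
proof -
  have w1: "omega \<in> Eis_units"
    unfolding Eis_units_def using Eis_omega Eis_diff[OF Eis_uminus[OF Eis_1] Eis_omega]
    by (auto intro!: bexI[of _ "-1-omega"] simp: algebra_simps omega_sq)
  have w2: "-1-omega \<in> Eis_units"
    unfolding Eis_units_def using Eis_omega Eis_diff[OF Eis_uminus[OF Eis_1] Eis_omega]
    by (auto intro!: bexI[of _ "omega"] simp: algebra_simps omega_sq)
  have w0: "1 \<in> Eis_units" unfolding Eis_units_def using Eis_1 by auto
  have s1: "(-1-omega)*(-1-omega) = omega" by (simp add: algebra_simps omega_sq)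
  show ?thesis using Eis_units_cases[OF assms]
  proof (elim disjE)
  qed (use w0 w1 w2 s1 omega_sq in \<open>force+\<close>)
qed

lemma Eis_unit_norm: assumes "u \<in> Eis_units" shows "u * cnj u = 1"
  using Eis_units_cases[OF assms]
  by (elim disjE; simp only: ; simp add: cnj_omega omega_sq algebra_simps)


lemma mult5: "A \<in> carrier_mat 5 5 \<Longrightarrow> B \<in> carrier_mat 5 5 \<Longrightarrow> i < 5 \<Longrightarrow> k < 5 \<Longrightarrow>
  (A * B) $$ (i,k) = (\<Sum>l<5. A $$ (i,l) * B $$ (l,k))"
  by (simp add: scalar_prod_def lessThan_atLeast0)

lemma multv5: "A \<in> carrier_mat 5 5 \<Longrightarrow> x \<in> carrier_vec 5 \<Longrightarrow> i < 5 \<Longrightarrow>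
  (A *\<^sub>v x) $ i = (\<Sum>k<5. A $$ (i,k) * x $ k)"
  by (simp add: scalar_prod_def lessThan_atLeast0)

lemma Eis_mat_mult: "A \<in> Eis_mat \<Longrightarrow> B \<in> Eis_mat \<Longrightarrow> A * B \<in> Eis_mat"
  unfolding Eis_mat_def by (auto simp: mult5 intro!: Eis_sum Eis_mult)

lemma Eis_mat_one: "1\<^sub>m 5 \<in> Eis_mat"
  unfolding Eis_mat_def by (auto simp: Eis_0 Eis_1)

lemma Lambda_mult: "A \<in> Eis_mat \<Longrightarrow> x \<in> Lambda \<Longrightarrow> A *\<^sub>v x \<in> Lambda"
  unfolding Eis_mat_def Lambda_def by (auto simp: multv5 intro!: Eis_sum Eis_mult)

lemma Gamma_carrier_mult:
  assumes A: "A \<in> Gamma_carrier" and B: "B \<in> Gamma_carrier"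
  shows "A * B \<in> Gamma_carrier"
proof -
  obtain NA where NA: "NA \<in> Eis_mat" "NA * A = 1\<^sub>m 5" "A * NA = 1\<^sub>m 5" using A unfolding Gamma_carrier_def by blast
  obtain NB where NB: "NB \<in> Eis_mat" "NB * B = 1\<^sub>m 5" "B * NB = 1\<^sub>m 5" using B unfolding Gamma_carrier_def by blast
  have cA: "A \<in> carrier_mat 5 5" "A \<in> Eis_mat" using A unfolding Gamma_carrier_def Eis_mat_def by auto
  have cB: "B \<in> carrier_mat 5 5" "B \<in> Eis_mat" using B unfolding Gamma_carrier_def Eis_mat_def by auto
  have cNA: "NA \<in> carrier_mat 5 5" using NA unfolding Eis_mat_def by auto
  have cNB: "NB \<in> carrier_mat 5 5" using NB unfolding Eis_mat_def by auto
  have "(NB * NA) * (A * B) = NB * (NA * A) * B"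
    using cA cB cNA cNB by (simp add: assoc_mult_mat[of _ 5 5 _ 5 _ 5])
  also have "\<dots> = 1\<^sub>m 5" using NA NB cB cNB by auto
  finally have i1: "(NB * NA) * (A * B) = 1\<^sub>m 5" .
  have "(A * B) * (NB * NA) = A * (B * NB) * NA"
    using cA cB cNA cNB by (simp add: assoc_mult_mat[of _ 5 5 _ 5 _ 5])
  also have "\<dots> = 1\<^sub>m 5" using NA NB cA cNA by auto
  finally have i2: "(A * B) * (NB * NA) = 1\<^sub>m 5" .
  have h: "herm ((A * B) *\<^sub>v x) ((A * B) *\<^sub>v y) = herm x y" if "x \<in> Lambda" "y \<in> Lambda" for x y
  proof -
    have cx: "x \<in> carrier_vec 5" "y \<in> carrier_vec 5" using that unfolding Lambda_def by auto
    have "(A * B) *\<^sub>v x = A *\<^sub>v (B *\<^sub>v x)" "(A * B) *\<^sub>v y = A *\<^sub>v (B *\<^sub>v y)"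
      using cA cB cx by auto
    moreover have "B *\<^sub>v x \<in> Lambda" "B *\<^sub>v y \<in> Lambda" using Lambda_mult cB that by auto
    ultimately show ?thesis using A B that unfolding Gamma_carrier_def by auto
  qed
  show ?thesis unfolding Gamma_carrier_def
    using Eis_mat_mult[OF cA(2) cB(2)] Eis_mat_mult[OF NB(1) NA(1)] i1 i2 h by blast
qed

lemma Gamma_carrier_one: "1\<^sub>m 5 \<in> Gamma_carrier"
  unfolding Gamma_carrier_def using Eis_mat_one
  by (auto simp: Lambda_def intro!: bexI[of _ "1\<^sub>m 5"])

lemma Gamma_carrier_inv:
  assumes A: "A \<in> Gamma_carrier" and N: "N \<in> Eis_mat" "N * A = 1\<^sub>m 5" "A * N = 1\<^sub>m 5"
  shows "N \<in> Gamma_carrier"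
proof -
  have cA: "A \<in> carrier_mat 5 5" using A unfolding Gamma_carrier_def Eis_mat_def by auto
  have cN: "N \<in> carrier_mat 5 5" using N unfolding Eis_mat_def by auto
  have h: "herm (N *\<^sub>v x) (N *\<^sub>v y) = herm x y" if "x \<in> Lambda" "y \<in> Lambda" for x y
  proof -
    have cx: "x \<in> carrier_vec 5" "y \<in> carrier_vec 5" using that unfolding Lambda_def by auto
    have "N *\<^sub>v x \<in> Lambda" "N *\<^sub>v y \<in> Lambda" using Lambda_mult N that by auto
    then have "herm (A *\<^sub>v (N *\<^sub>v x)) (A *\<^sub>v (N *\<^sub>v y)) = herm (N *\<^sub>v x) (N *\<^sub>v y)"
      using A unfolding Gamma_carrier_def by auto
    moreover have "A *\<^sub>v (N *\<^sub>v x) = x" "A *\<^sub>v (N *\<^sub>v y) = y"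
      using cA cN cx N(3) by (auto simp flip: assoc_mult_mat_vec)
    ultimately show ?thesis by simp
  qed
  show ?thesis unfolding Gamma_carrier_def using N A h
    unfolding Gamma_carrier_def by blast
qed

lemma Gamma_carrier_D: "A \<in> Gamma_carrier \<Longrightarrow> A \<in> carrier_mat 5 5"
  unfolding Gamma_carrier_def Eis_mat_def by auto

lemma group_Gamma: "group Gamma"
proof (rule groupI)
  fix x y z assume "x \<in> carrier Gamma" "y \<in> carrier Gamma" "z \<in> carrier Gamma"
  then show "x \<otimes>\<^bsub>Gamma\<^esub> y \<otimes>\<^bsub>Gamma\<^esub> z = x \<otimes>\<^bsub>Gamma\<^esub> (y \<otimes>\<^bsub>Gamma\<^esub> z)"
    unfolding Gamma_def using Gamma_carrier_D by (simp add: assoc_mult_mat[of _ 5 5 _ 5 _ 5])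
next
  fix x assume x: "x \<in> carrier Gamma"
  then obtain N where N: "N \<in> Eis_mat" "N * x = 1\<^sub>m 5" "x * N = 1\<^sub>m 5"
    unfolding Gamma_def Gamma_carrier_def by auto
  then have "N \<in> Gamma_carrier" using Gamma_carrier_inv x unfolding Gamma_def by auto
  then show "\<exists>y\<in>carrier Gamma. y \<otimes>\<^bsub>Gamma\<^esub> x = \<one>\<^bsub>Gamma\<^esub>"
    using N unfolding Gamma_def by auto
qed (auto simp: Gamma_def Gamma_carrier_mult Gamma_carrier_one dest: Gamma_carrier_D)

lemma carrier_Gamma: "carrier Gamma = Gamma_carrier" by (simp add: Gamma_def)
lemma mult_Gamma: "x \<otimes>\<^bsub>Gamma\<^esub> y = x * y" by (simp add: Gamma_def)
lemma one_Gamma: "\<one>\<^bsub>Gamma\<^esub> = 1\<^sub>m 5" by (simp add: Gamma_def)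

lemma herm_smult: "x \<in> carrier_vec 5 \<Longrightarrow> y \<in> carrier_vec 5 \<Longrightarrow>
  herm (a \<cdot>\<^sub>v x) (b \<cdot>\<^sub>v y) = a * cnj b * herm x y"
  unfolding herm_def by (simp add: sum_distrib_left algebra_simps)

lemma scalar_in_Gamma:
  assumes u: "u \<in> Eis_units"
  shows "u \<cdot>\<^sub>m 1\<^sub>m 5 \<in> Gamma_carrier"
proof -
  have ue: "u \<in> Eis" using u unfolding Eis_units_def by auto
  have n: "u * cnj u = 1" "cnj u * u = 1" using Eis_unit_norm[OF u] by (auto simp: mult.commute)
  have em: "c \<cdot>\<^sub>m 1\<^sub>m 5 \<in> Eis_mat" if "c \<in> Eis" for c
    unfolding Eis_mat_def using that by (auto simp: Eis_0)
  have "(cnj u \<cdot>\<^sub>m 1\<^sub>m 5) * (u \<cdot>\<^sub>m 1\<^sub>m 5) = 1\<^sub>m 5"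
    by (rule eq_matI) (auto simp: mult5 n mult.commute)
  moreover have "(u \<cdot>\<^sub>m 1\<^sub>m 5) * (cnj u \<cdot>\<^sub>m 1\<^sub>m 5) = 1\<^sub>m 5"
    by (rule eq_matI) (auto simp: mult5 n)
  moreover have "herm ((u \<cdot>\<^sub>m 1\<^sub>m 5) *\<^sub>v x) ((u \<cdot>\<^sub>m 1\<^sub>m 5) *\<^sub>v y) = herm x y"
    if "x \<in> carrier_vec 5" "y \<in> carrier_vec 5" for x y
  proof -
    have "(u \<cdot>\<^sub>m 1\<^sub>m 5) *\<^sub>v x = u \<cdot>\<^sub>v x" "(u \<cdot>\<^sub>m 1\<^sub>m 5) *\<^sub>v y = u \<cdot>\<^sub>v y"
      using that by (auto simp: multv5 if_distrib[of "\<lambda>t. t * _"] cong: if_cong)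
    then show ?thesis using herm_smult[OF that] n by simp
  qed
  ultimately show ?thesis unfolding Gamma_carrier_def
    using em[OF ue] em[OF Eis_cnj[OF ue]] by (auto simp: Lambda_def)
qed


lemma smult_one_mult: "(x::complex mat) \<in> carrier_mat 5 5 \<Longrightarrow> (u \<cdot>\<^sub>m 1\<^sub>m 5) * x = u \<cdot>\<^sub>m x"
  using mult_smult_assoc_mat[of "1\<^sub>m 5" 5 5 x 5 u] by auto

lemma mult_smult_one: "(x::complex mat) \<in> carrier_mat 5 5 \<Longrightarrow> x * (u \<cdot>\<^sub>m 1\<^sub>m 5) = u \<cdot>\<^sub>m x"
  using mult_smult_distrib[of x 5 5 "1\<^sub>m 5" 5 u] by auto

lemma units_mult: "u \<in> Eis_units \<Longrightarrow> v \<in> Eis_units \<Longrightarrow> u * v \<in> Eis_units"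
  unfolding Eis_units_def
proof safe
  fix u' v' assume "u \<in> Eis" "v \<in> Eis" "u' \<in> Eis" "v' \<in> Eis" "u * u' = 1" "v * v' = 1"
  then show "\<exists>w\<in>Eis. u * v * w = 1"
    by (intro bexI[of _ "u' * v'"]) (auto intro: Eis_mult simp: algebra_simps)
qed (auto intro: Eis_mult)

lemma units_cnj: "u \<in> Eis_units \<Longrightarrow> cnj u \<in> Eis_units"
  using Eis_unit_norm[of u] unfolding Eis_units_def
  by (auto intro!: Eis_cnj bexI[of _ u] simp: mult.commute)

lemma one_unit: "1 \<in> Eis_units" unfolding Eis_units_def using Eis_1 by auto

lemma unit_scalars_sub: "unit_scalars \<subseteq> Gamma_carrier"
  unfolding unit_scalars_def using scalar_in_Gamma by auto

lemma subgroup_U: "subgroup unit_scalars Gamma"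
proof -
  interpret group Gamma by (rule group_Gamma)
  show ?thesis
  proof (rule subgroupI)
    show "unit_scalars \<subseteq> carrier Gamma" using unit_scalars_sub carrier_Gamma by simp
    show "unit_scalars \<noteq> {}" unfolding unit_scalars_def using one_unit by auto
  next
    fix a assume "a \<in> unit_scalars"
    then obtain u where u: "u \<in> Eis_units" "a = u \<cdot>\<^sub>m 1\<^sub>m 5" unfolding unit_scalars_def by auto
    have "(cnj u \<cdot>\<^sub>m 1\<^sub>m 5) \<otimes>\<^bsub>Gamma\<^esub> a = \<one>\<^bsub>Gamma\<^esub>"
      unfolding mult_Gamma one_Gamma u(2)
      using Eis_unit_norm[OF u(1)] by (simp add: smult_one_mult mult.commute, intro eq_matI, auto simp: mult.commute)
    then have "inv\<^bsub>Gamma\<^esub> a = cnj u \<cdot>\<^sub>m 1\<^sub>m 5"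
      by (intro inv_equality) (auto simp: carrier_Gamma u scalar_in_Gamma units_cnj)
    then show "inv\<^bsub>Gamma\<^esub> a \<in> unit_scalars" unfolding unit_scalars_def using units_cnj[OF u(1)] by auto
  next
    fix a b assume "a \<in> unit_scalars" "b \<in> unit_scalars"
    then obtain u v where "u \<in> Eis_units" "a = u \<cdot>\<^sub>m 1\<^sub>m 5" "v \<in> Eis_units" "b = v \<cdot>\<^sub>m 1\<^sub>m 5"
      unfolding unit_scalars_def by auto
    then show "a \<otimes>\<^bsub>Gamma\<^esub> b \<in> unit_scalars"
      unfolding unit_scalars_def mult_Gamma using units_mult
      by (auto simp: smult_one_mult intro!: exI[of _ "u*v"])
  qed
qed

lemma normal_U: "unit_scalars \<lhd> Gamma"
proof -
  interpret group Gamma by (rule group_Gamma)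
  show ?thesis
  proof (rule normalI[OF subgroup_U], intro ballI)
    fix x assume "x \<in> carrier Gamma"
    then have x: "x \<in> carrier_mat 5 5" using carrier_Gamma Gamma_carrier_D by auto
    show "unit_scalars #>\<^bsub>Gamma\<^esub> x = x <#\<^bsub>Gamma\<^esub> unit_scalars"
      unfolding r_coset_def l_coset_def mult_Gamma unit_scalars_def
      using smult_one_mult[OF x] mult_smult_one[OF x] by auto
  qed
qed

lemma group_PGamma: "group PGamma"
  unfolding PGamma_def using normal.factorgroup_is_group[OF normal_U] .

lemma xi_carrier: "xi j v \<in> carrier_vec 5" unfolding xi_def by simp

lemma xi_smult: "v \<in> carrier_vec 5 \<Longrightarrow> xi j (c \<cdot>\<^sub>v v) = cnj c \<cdot>\<^sub>v xi j v"
  unfolding xi_def by (rule eq_vecI) auto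

lemma xi_xi: "v \<in> carrier_vec 5 \<Longrightarrow> xi j (xi j v) = v"
  unfolding xi_def by (rule eq_vecI) auto

lemma cline_range: "cline v = range (\<lambda>c. c \<cdot>\<^sub>v v)"
  unfolding cline_def by auto

lemma act_line_cline: "A \<in> carrier_mat 5 5 \<Longrightarrow> v \<in> carrier_vec 5 \<Longrightarrow>
   act_line A (cline v) = cline (A *\<^sub>v v)"
proof -
  assume A: "A \<in> carrier_mat 5 5" and v: "v \<in> carrier_vec 5"
  have "act_line A (cline v) = range (\<lambda>c. A *\<^sub>v (c \<cdot>\<^sub>v v))"
    unfolding act_line_def cline_range by (simp add: image_image)
  also have "\<dots> = range (\<lambda>c. c \<cdot>\<^sub>v (A *\<^sub>v v))" using mult_mat_vec[OF A v] by simp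
  finally show ?thesis unfolding cline_range .
qed

lemma cline_carrier: "v \<in> carrier_vec 5 \<Longrightarrow> cline v \<subseteq> carrier_vec 5"
  unfolding cline_def by auto

lemma H4_iff: "L \<in> H4 j \<longleftrightarrow> (\<exists>v. L = cline v \<and> v \<in> carrier_vec 5 \<and> Re (herm v v) < 0 \<and> (\<exists>e. xi j v = e \<cdot>\<^sub>v v))"
proof
  assume "L \<in> H4 j"
  then obtain v where v: "L = cline v" "v \<in> carrier_vec 5" "Re (herm v v) < 0" "xi j ` L = L"
    unfolding H4_def CH4_def by auto
  have "v \<in> cline v" unfolding cline_def by (auto intro!: exI[of _ 1])
  then have "xi j v \<in> cline v" using v by auto
  then show "\<exists>v. L = cline v \<and> v \<in> carrier_vec 5 \<and> Re (herm v v) < 0 \<and> (\<exists>e. xi j v = e \<cdot>\<^sub>v v)"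
    using v unfolding cline_def by auto
next
  assume "\<exists>v. L = cline v \<and> v \<in> carrier_vec 5 \<and> Re (herm v v) < 0 \<and> (\<exists>e. xi j v = e \<cdot>\<^sub>v v)"
  then obtain v e where v: "L = cline v" "v \<in> carrier_vec 5" "Re (herm v v) < 0" "xi j v = e \<cdot>\<^sub>v v"
    by auto
  have sub: "xi j ` cline v \<subseteq> cline v"
  proof
    fix y assume "y \<in> xi j ` cline v"
    then obtain c where "y = xi j (c \<cdot>\<^sub>v v)" unfolding cline_def by auto
    then have "y = (cnj c * e) \<cdot>\<^sub>v v" using xi_smult[OF v(2)] v(4) by (simp add: smult_smult_assoc)
    then show "y \<in> cline v" unfolding cline_def by auto
  qed
  have "cline v \<subseteq> xi j ` cline v"
  proof
    fix y assume y: "y \<in> cline v"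
    then have "xi j y \<in> cline v" using sub by auto
    moreover have "y = xi j (xi j y)" using xi_xi y cline_carrier[OF v(2)] by auto
    ultimately show "y \<in> xi j ` cline v" by auto
  qed
  then show "L \<in> H4 j" unfolding H4_def CH4_def using sub v by auto
qed

lemma H4_carrier: "L \<in> H4 j \<Longrightarrow> L \<subseteq> carrier_vec 5"
  using H4_iff cline_carrier by blast

definition herm_pres :: "complex mat \<Rightarrow> bool" where
  "herm_pres A = (\<forall>x \<in> carrier_vec 5. herm (A *\<^sub>v x) (A *\<^sub>v x) = herm x x)"

lemma stab_into:
  assumes A: "A \<in> carrier_mat 5 5" and h: "herm_pres A"
    and c: "\<And>x. x \<in> carrier_vec 5 \<Longrightarrow> xi j (A *\<^sub>v x) = lam \<cdot>\<^sub>v (A *\<^sub>v xi j x)"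
    and L: "L \<in> H4 j"
  shows "act_line A L \<in> H4 j"
proof -
  obtain v e where v: "L = cline v" "v \<in> carrier_vec 5" "Re (herm v v) < 0" "xi j v = e \<cdot>\<^sub>v v"
    using L H4_iff by blast
  have "xi j (A *\<^sub>v v) = (lam * e) \<cdot>\<^sub>v (A *\<^sub>v v)"
    using c[OF v(2)] v(4) mult_mat_vec[OF A v(2)] by (simp add: smult_smult_assoc)
  moreover have "herm (A *\<^sub>v v) (A *\<^sub>v v) = herm v v" using h v(2) unfolding herm_pres_def by auto
  ultimately show ?thesis unfolding H4_iff act_line_cline[OF A v(2)] v(1)
    using v A by (intro exI[of _ "A *\<^sub>v v"]) auto
qed

lemma act_line_mult: "A \<in> carrier_mat 5 5 \<Longrightarrow> B \<in> carrier_mat 5 5 \<Longrightarrow> L \<subseteq> carrier_vec 5 \<Longrightarrow>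
  act_line (A * B) L = act_line A (act_line B L)"
  unfolding act_line_def by (auto simp: image_image subsetD)

lemma act_line_mult_H4: "A \<in> carrier_mat 5 5 \<Longrightarrow> B \<in> carrier_mat 5 5 \<Longrightarrow>
  act_line (A * B) ` H4 j = act_line A ` (act_line B ` H4 j)"
  using act_line_mult H4_carrier by (simp add: image_image)

lemma act_line_scalar: "u \<noteq> 0 \<Longrightarrow> L \<in> H4 j \<Longrightarrow> act_line (u \<cdot>\<^sub>m 1\<^sub>m 5) L = L"
proof -
  assume u: "u \<noteq> 0" and L: "L \<in> H4 j"
  obtain v where v: "L = cline v" "v \<in> carrier_vec 5" using L H4_iff by blast
  have "(u \<cdot>\<^sub>m 1\<^sub>m 5) *\<^sub>v v = u \<cdot>\<^sub>v v"
    using v by (intro eq_vecI) (auto simp: multv5 if_distrib[of "\<lambda>t. t * _"] cong: if_cong)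
  moreover have "cline (u \<cdot>\<^sub>v v) = cline v"
  proof -
    have "cline (u \<cdot>\<^sub>v v) = range (\<lambda>c. (c * u) \<cdot>\<^sub>v v)"
      unfolding cline_range by (simp add: smult_smult_assoc)
    also have "\<dots> = range (\<lambda>c. c \<cdot>\<^sub>v v)"
    proof (rule subset_antisym)
      show "range (\<lambda>c. c \<cdot>\<^sub>v v) \<subseteq> range (\<lambda>c. (c * u) \<cdot>\<^sub>v v)"
      proof
        fix y assume "y \<in> range (\<lambda>c. c \<cdot>\<^sub>v v)"
        then obtain c where "y = c \<cdot>\<^sub>v v" by blast
        then have "y = ((c / u) * u) \<cdot>\<^sub>v v" using u by simp
        then show "y \<in> range (\<lambda>c. (c * u) \<cdot>\<^sub>v v)" by blast
      qed
    qed blast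
    finally show ?thesis unfolding cline_range .
  qed
  ultimately show ?thesis using act_line_cline[of "u \<cdot>\<^sub>m 1\<^sub>m 5" v] v by simp
qed

lemma unit_nz: "u \<in> Eis_units \<Longrightarrow> u \<noteq> 0"
  unfolding Eis_units_def by auto

lemma so: "(1::complex) \<cdot>\<^sub>m 1\<^sub>m 5 = 1\<^sub>m 5" by (rule eq_matI) auto

definition Stab :: "nat \<Rightarrow> complex mat set set" where
  "Stab j = {C \<in> carrier PGamma. \<forall>M \<in> C. act_line M ` H4 j = H4 j}"

lemma PGammaR_eq: "PGammaR j = PGamma\<lparr>carrier := Stab j\<rparr>"
  unfolding PGammaR_def Stab_def by simp

lemma subgroup_Stab: "subgroup (Stab j) PGamma"
proof -
  interpret G: group Gamma by (rule group_Gamma)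
  interpret N: normal unit_scalars Gamma by (rule normal_U)
  interpret P: group PGamma by (rule group_PGamma)
  have memc: "M \<in> carrier_mat 5 5" if "M \<in> C" "C \<in> carrier PGamma" for M C
  proof -
    have "C \<subseteq> carrier Gamma" using that subgroup.rcosets_carrier[OF subgroup_U group_Gamma] unfolding PGamma_def FactGroup_def by auto
    then show ?thesis using that Gamma_carrier_D carrier_Gamma by auto
  qed
  show ?thesis
  proof (rule P.subgroupI)
    show "Stab j \<subseteq> carrier PGamma" unfolding Stab_def by auto
  next
    have "unit_scalars \<in> carrier PGamma" using P.one_closed unfolding PGamma_def FactGroup_def by simp
    moreover have "act_line M ` H4 j = H4 j" if M: "M \<in> unit_scalars" for M
    proof -
      obtain u where u: "u \<in> Eis_units" "M = u \<cdot>\<^sub>m 1\<^sub>m 5" using M unfolding unit_scalars_def by auto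
      show ?thesis using act_line_scalar[OF unit_nz[OF u(1)]] u(2) by simp
    qed
    ultimately show "Stab j \<noteq> {}" unfolding Stab_def by auto
  next
    fix a assume a: "a \<in> Stab j"
    then have ac: "a \<in> carrier PGamma" unfolding Stab_def by auto
    have "inv\<^bsub>PGamma\<^esub> a = set_inv\<^bsub>Gamma\<^esub> a"
      using N.inv_FactGroup ac unfolding PGamma_def by auto
    moreover have "act_line M ` H4 j = H4 j" if MM: "M \<in> set_inv\<^bsub>Gamma\<^esub> a" for M
    proof -
      obtain A where A: "A \<in> a" "M = inv\<^bsub>Gamma\<^esub> A" using MM unfolding SET_INV_def by auto
      have Ac: "A \<in> carrier Gamma" 
        using subgroup.rcosets_carrier[OF subgroup_U group_Gamma] ac A(1) unfolding PGamma_def FactGroup_def by auto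
      have MA: "M * A = 1\<^sub>m 5" using G.l_inv[OF Ac] A(2) mult_Gamma one_Gamma by simp
      have Mc: "M \<in> carrier_mat 5 5" using G.inv_closed[OF Ac] A(2) carrier_Gamma Gamma_carrier_D by simp
      have Ac2: "A \<in> carrier_mat 5 5" using memc[OF A(1) ac] .
      have "act_line M ` H4 j = act_line M ` (act_line A ` H4 j)" using a A(1) unfolding Stab_def by auto
      also have "\<dots> = act_line (M * A) ` H4 j" using act_line_mult_H4[OF Mc Ac2] by simp
      also have "\<dots> = H4 j" using MA act_line_scalar[of 1, unfolded so] by simp
      finally show ?thesis .
    qed
    ultimately show "inv\<^bsub>PGamma\<^esub> a \<in> Stab j" unfolding Stab_def using P.inv_closed[OF ac] by auto
  next
    fix a b assume a: "a \<in> Stab j" and b: "b \<in> Stab j"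
    then have ac: "a \<in> carrier PGamma" and bc: "b \<in> carrier PGamma" unfolding Stab_def by auto
    have "a \<otimes>\<^bsub>PGamma\<^esub> b = a <#>\<^bsub>Gamma\<^esub> b" unfolding PGamma_def FactGroup_def by simp
    moreover have "act_line M ` H4 j = H4 j" if MM: "M \<in> a <#>\<^bsub>Gamma\<^esub> b" for M
    proof -
      obtain A B where AB: "A \<in> a" "B \<in> b" "M = A * B" using MM unfolding set_mult_def mult_Gamma by auto
      have "act_line M ` H4 j = act_line A ` (act_line B ` H4 j)"
        using act_line_mult_H4 memc AB ac bc by simp
      then show ?thesis using a b AB unfolding Stab_def by auto
    qed
    ultimately show "a \<otimes>\<^bsub>PGamma\<^esub> b \<in> Stab j" unfolding Stab_def using P.m_closed[OF ac bc] by auto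
  qed
qed

lemma group_PGammaR: "group (PGammaR j)"
  unfolding PGammaR_eq using subgroup.subgroup_is_group[OF subgroup_Stab group_PGamma] .


lemma carrier_O: "carrier (O_Psi j) = {M \<in> carrier_mat 5 5.
      (\<exists>N \<in> carrier_mat 5 5. N * M = 1\<^sub>m 5 \<and> M * N = 1\<^sub>m 5) \<and>
      (\<forall>y \<in> carrier_vec 5. Psi j (M *\<^sub>v y) = Psi j y)}"
  unfolding O_Psi_def by simp
lemma mult_O: "x \<otimes>\<^bsub>O_Psi j\<^esub> y = x * y" by (simp add: O_Psi_def)
lemma one_O: "\<one>\<^bsub>O_Psi j\<^esub> = 1\<^sub>m 5" by (simp add: O_Psi_def)

lemma O_inv:
  assumes M: "M \<in> carrier (O_Psi j)" and N: "N \<in> carrier_mat 5 5" "N * M = 1\<^sub>m 5" "M * N = 1\<^sub>m 5"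
  shows "N \<in> carrier (O_Psi j)"
proof -
  have cM: "M \<in> carrier_mat 5 5" using M carrier_O by auto
  have "Psi j (N *\<^sub>v y) = Psi j y" if "y \<in> carrier_vec 5" for y
  proof -
    have "Psi j (M *\<^sub>v (N *\<^sub>v y)) = Psi j (N *\<^sub>v y)" using M that N carrier_O by auto
    moreover have "M *\<^sub>v (N *\<^sub>v y) = y" using cM N that by (auto simp flip: assoc_mult_mat_vec)
    ultimately show ?thesis by simp
  qed
  then show ?thesis unfolding carrier_O using N cM by blast
qed

lemma O_mult:
  assumes A: "A \<in> carrier (O_Psi j)" and B: "B \<in> carrier (O_Psi j)"
  shows "A * B \<in> carrier (O_Psi j)"
proof -
  obtain NA where NA: "NA \<in> carrier_mat 5 5" "NA * A = 1\<^sub>m 5" "A * NA = 1\<^sub>m 5" using A carrier_O by blast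
  obtain NB where NB: "NB \<in> carrier_mat 5 5" "NB * B = 1\<^sub>m 5" "B * NB = 1\<^sub>m 5" using B carrier_O by blast
  have cA: "A \<in> carrier_mat 5 5" using A carrier_O by auto
  have cB: "B \<in> carrier_mat 5 5" using B carrier_O by auto
  have e1: "NA * (A * B) = B" using assoc_mult_mat[of NA 5 5 A 5 B 5] NA cA cB by simp
  have e2: "B * (NB * NA) = NA" using assoc_mult_mat[of B 5 5 NB 5 NA 5] NB cB NA by simp
  have i1: "NB * (NA * (A * B)) = 1\<^sub>m 5" "(NB * NA) * (A * B) = 1\<^sub>m 5"
    using e1 NB cA cB NA by (auto simp: assoc_mult_mat[of NB 5 5 NA 5 "A * B" 5])
  have i2: "A * (B * (NB * NA)) = 1\<^sub>m 5" "(A * B) * (NB * NA) = 1\<^sub>m 5"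
    using e2 NA cA cB NB by (auto simp: assoc_mult_mat[of A 5 5 B 5 "NB * NA" 5])
  have "Psi j ((A * B) *\<^sub>v y) = Psi j y" if "y \<in> carrier_vec 5" for y
  proof -
    have "(A * B) *\<^sub>v y = A *\<^sub>v (B *\<^sub>v y)" using cA cB that by auto
    then show ?thesis using A B that carrier_O by auto
  qed
  then show ?thesis unfolding carrier_O using i1 i2 cA cB NA NB
    by (intro CollectI conjI bexI[of _ "NB * NA"]) auto
qed

lemma O_one: "1\<^sub>m 5 \<in> carrier (O_Psi j)"
  unfolding carrier_O by (auto intro!: bexI[of _ "1\<^sub>m 5"])

lemma O_cmat: "M \<in> carrier (O_Psi j) \<Longrightarrow> M \<in> carrier_mat 5 5"
  unfolding carrier_O by auto

lemma group_O: "group (O_Psi j)"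
proof (rule groupI)
  fix x y z assume "x \<in> carrier (O_Psi j)" "y \<in> carrier (O_Psi j)" "z \<in> carrier (O_Psi j)"
  then show "x \<otimes>\<^bsub>O_Psi j\<^esub> y \<otimes>\<^bsub>O_Psi j\<^esub> z = x \<otimes>\<^bsub>O_Psi j\<^esub> (y \<otimes>\<^bsub>O_Psi j\<^esub> z)"
    unfolding mult_O using carrier_O by (simp add: assoc_mult_mat[of _ 5 5 _ 5 _ 5])
next
  fix x assume x: "x \<in> carrier (O_Psi j)"
  then obtain N where N: "N \<in> carrier_mat 5 5" "N * x = 1\<^sub>m 5" "x * N = 1\<^sub>m 5"
    using carrier_O by blast
  then show "\<exists>y\<in>carrier (O_Psi j). y \<otimes>\<^bsub>O_Psi j\<^esub> x = \<one>\<^bsub>O_Psi j\<^esub>"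
    using O_inv[OF x N] unfolding mult_O one_O by blast
qed (auto simp: mult_O one_O O_mult O_one dest: O_cmat)

lemma Pv_unit: "(P :: 'a::comm_ring_1 mat) \<in> carrier_mat 5 5 \<Longrightarrow> k < 5 \<Longrightarrow> i < 5 \<Longrightarrow>
  (P *\<^sub>v unit_vec 5 k) $ i = P $$ (i,k)"
  by (simp add: multv5 if_distrib[of "\<lambda>t. _ * t"] cong: if_cong)

lemma sum5_delta: "(k::nat) < 5 \<Longrightarrow> (\<Sum>i<(5::nat). (if i = k then f i else 0)) = (f k :: 'a :: comm_monoid_add)"
  by (simp add: sum.delta)

lemma polar:
  fixes P :: "int mat" and c c' :: "nat \<Rightarrow> int"
  assumes P: "P \<in> carrier_mat 5 5"
    and Q: "\<And>y. y \<in> carrier_vec 5 \<Longrightarrow> (\<Sum>i<5. c' i * ((P *\<^sub>v y) $ i)^2) = (\<Sum>i<5. c i * (y $ i)^2)"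
    and kl: "k < 5" "l < 5"
  shows "(\<Sum>i<5. c' i * P $$ (i,k) * P $$ (i,l)) = (if k = l then c k else 0)"
proof (cases "k = l")
  case True
  have "(\<Sum>i<5. c' i * ((P *\<^sub>v unit_vec 5 k) $ i)^2) = (\<Sum>i<5. c i * (unit_vec 5 k $ i)^2)"
    using Q[of "unit_vec 5 k"] by simp
  moreover have "(\<Sum>i<5. c' i * ((P *\<^sub>v unit_vec 5 k) $ i)^2) = (\<Sum>i<5. c' i * P $$ (i,k) * P $$ (i,k))"
    using Pv_unit[OF P kl(1)] by (intro sum.cong) (auto simp: power2_eq_square)
  moreover have "(\<Sum>i<5. c i * (unit_vec 5 k $ i)^2) = (\<Sum>i<5. (if i = k then c i else 0))"
    using kl by (intro sum.cong) auto
  ultimately show ?thesis using True kl sum5_delta[of k c] by simp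
next
  case False
  let ?e = "unit_vec 5 k + unit_vec 5 l :: int vec"
  have ec: "?e \<in> carrier_vec 5" by simp
  have Pe: "(P *\<^sub>v ?e) $ i = P $$ (i,k) + P $$ (i,l)" if "i < 5" for i
  proof -
    have "P *\<^sub>v ?e = P *\<^sub>v unit_vec 5 k + P *\<^sub>v unit_vec 5 l"
      using P by (simp add: mult_add_distrib_mat_vec[of P 5 5])
    then show ?thesis using that Pv_unit[OF P kl(1) that] Pv_unit[OF P kl(2) that] P by simp
  qed
  have Qk: "(\<Sum>i<5. c' i * ((P *\<^sub>v unit_vec 5 k) $ i)^2) = (\<Sum>i<5. c i * (unit_vec 5 k $ i)^2)"
    using Q[of "unit_vec 5 k"] by simp
  have Ql: "(\<Sum>i<5. c' i * ((P *\<^sub>v unit_vec 5 l) $ i)^2) = (\<Sum>i<5. c i * (unit_vec 5 l $ i)^2)"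
    using Q[of "unit_vec 5 l"] by simp
  have Qe: "(\<Sum>i<5. c' i * ((P *\<^sub>v ?e) $ i)^2) = (\<Sum>i<5. c i * (?e $ i)^2)"
    using Q[OF ec] .
  have "(\<Sum>i<5. c' i * ((P *\<^sub>v ?e) $ i)^2) =
     (\<Sum>i<5. c' i * ((P *\<^sub>v unit_vec 5 k) $ i)^2) + (\<Sum>i<5. c' i * ((P *\<^sub>v unit_vec 5 l) $ i)^2)
     + 2 * (\<Sum>i<5. c' i * P $$ (i,k) * P $$ (i,l))"
  proof -
    have "(\<Sum>i<5. c' i * ((P *\<^sub>v ?e) $ i)^2) = (\<Sum>i<5. c' i * ((P *\<^sub>v unit_vec 5 k) $ i)^2
       + c' i * ((P *\<^sub>v unit_vec 5 l) $ i)^2 + 2 * (c' i * P $$ (i,k) * P $$ (i,l)))"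
      using Pe Pv_unit[OF P kl(1)] Pv_unit[OF P kl(2)]
      by (intro sum.cong) (auto simp: power2_eq_square algebra_simps)
    then show ?thesis by (simp add: sum.distrib sum_distrib_left)
  qed
  moreover have "(\<Sum>i<5. c i * (?e $ i)^2) = (\<Sum>i<5. c i * (unit_vec 5 k $ i)^2) + (\<Sum>i<5. c i * (unit_vec 5 l $ i)^2)"
  proof -
    have "(\<Sum>i<5. c i * (?e $ i)^2) = (\<Sum>i<5. c i * (unit_vec 5 k $ i)^2 + c i * (unit_vec 5 l $ i)^2)"
      using kl False by (intro sum.cong) auto
    then show ?thesis by (simp add: sum.distrib)
  qed
  ultimately show ?thesis using Qk Ql Qe False by simp
qed

lemma Psi_expand: "Psi j y = (\<Sum>i<5. psi_coeff j i * (y $ i)^2)"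
  unfolding Psi_def ..

lemma O_gram:
  assumes M: "M \<in> carrier (O_Psi j)" and kl: "k < 5" "l < 5"
  shows "(\<Sum>i<5. psi_coeff j i * M $$ (i,k) * M $$ (i,l)) = (if k = l then psi_coeff j k else 0)"
  using M carrier_O polar[of M "psi_coeff j" "psi_coeff j" k l] kl unfolding Psi_def by auto

lemma O_dual:
  assumes M: "M \<in> carrier (O_Psi j)" and N: "N \<in> carrier_mat 5 5" "M * N = 1\<^sub>m 5"
    and km: "k < 5" "m < 5"
  shows "psi_coeff j k * N $$ (k,m) = psi_coeff j m * M $$ (m,k)"
proof -
  have cM: "M \<in> carrier_mat 5 5" using M carrier_O by auto
  let ?c = "psi_coeff j"
  have "(\<Sum>l<5. (\<Sum>i<5. ?c i * M $$ (i,k) * M $$ (i,l)) * N $$ (l,m)) = (\<Sum>l<5. (if l = k then ?c k * N $$ (l,m) else 0))"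
    using O_gram[OF M km(1)] by (intro sum.cong) auto
  also have "\<dots> = ?c k * N $$ (k,m)" using sum5_delta[OF km(1), of "\<lambda>l. ?c k * N $$ (l,m)"] by simp
  finally have e1: "(\<Sum>l<5. (\<Sum>i<5. ?c i * M $$ (i,k) * M $$ (i,l)) * N $$ (l,m)) = ?c k * N $$ (k,m)" .
  have "(\<Sum>l<5. (\<Sum>i<5. ?c i * M $$ (i,k) * M $$ (i,l)) * N $$ (l,m))
      = (\<Sum>l<5. \<Sum>i<5. ?c i * M $$ (i,k) * M $$ (i,l) * N $$ (l,m))"
    by (simp add: sum_distrib_right)
  also have "\<dots> = (\<Sum>i<5. \<Sum>l<5. ?c i * M $$ (i,k) * M $$ (i,l) * N $$ (l,m))"
    by (rule sum.swap)
  also have "\<dots> = (\<Sum>i<5. ?c i * M $$ (i,k) * (\<Sum>l<5. M $$ (i,l) * N $$ (l,m)))"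
    by (simp add: sum_distrib_left mult.assoc)
  also have "\<dots> = (\<Sum>i<5. (if i = m then ?c i * M $$ (i,k) else 0))"
  proof (rule sum.cong)
    fix i assume "i \<in> {..<5::nat}"
    then have i: "i < 5" by simp
    have "(\<Sum>l<5. M $$ (i,l) * N $$ (l,m)) = (M * N) $$ (i,m)"
      using mult5[OF cM N(1) i km(2)] by simp
    also have "\<dots> = (if i = m then 1 else 0)" using N(2) i km by simp
    finally show "?c i * M $$ (i,k) * (\<Sum>l<5. M $$ (i,l) * N $$ (l,m)) = (if i = m then ?c i * M $$ (i,k) else 0)"
      by simp
  qed simp
  also have "\<dots> = ?c m * M $$ (m,k)" using sum5_delta[OF km(2), of "\<lambda>i. ?c i * M $$ (i,k)"] by simp
  finally show ?thesis using e1 by simp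
qed



definition dd :: "nat \<Rightarrow> nat \<Rightarrow> complex" where "dd j i = (if i < 5 - j then 1 else theta)"
definition sg :: "nat \<Rightarrow> nat \<Rightarrow> complex" where "sg j i = (if i < 5 - j then 1 else -1)"
definition hh :: "nat \<Rightarrow> complex" where "hh i = (if i = 0 then -1 else 1)"
definition cmat :: "nat \<Rightarrow> int mat \<Rightarrow> complex mat" where
  "cmat j M = mat 5 5 (\<lambda>(i,k). dd j i * of_int (M $$ (i,k)) / dd j k)"

lemma dd_nz: "dd j i \<noteq> 0" unfolding dd_def using theta_nz by auto
lemma cnj_dd: "cnj (dd j i) = sg j i * dd j i" unfolding dd_def sg_def using cnj_theta by auto
lemma sg_sq: "sg j i * sg j i = 1" unfolding sg_def by auto
lemma cnj_sg: "cnj (sg j i) = sg j i" unfolding sg_def by auto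
lemma hh_dd: "j \<le> 4 \<Longrightarrow> hh i * dd j i * cnj (dd j i) = of_int (psi_coeff j i)"
  unfolding hh_def dd_def psi_coeff_def using cnj_theta theta_sq by auto
lemma div_sg: "x / sg j k = x * sg j k" unfolding sg_def by auto
lemma cnj_hh: "cnj (hh i) = hh i" unfolding hh_def by auto
lemma xi_idx: "i < 5 \<Longrightarrow> xi j v $ i = sg j i * cnj (v $ i)"
  unfolding xi_def sg_def by auto
lemma herm_hh: "herm x y = (\<Sum>i<5. hh i * x $ i * cnj (y $ i))"
  unfolding herm_def hh_def ..
lemma Eis_dd: "dd j i \<in> Eis" unfolding dd_def using Eis_1 Eis_theta by auto

lemma cmat_carrier: "cmat j M \<in> carrier_mat 5 5" unfolding cmat_def by simp
lemma dim_cmat[simp]: "dim_row (cmat j M) = 5" "dim_col (cmat j M) = 5" unfolding cmat_def by auto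
lemma cmat_idx: "i < 5 \<Longrightarrow> k < 5 \<Longrightarrow> cmat j M $$ (i,k) = dd j i * of_int (M $$ (i,k)) / dd j k"
  unfolding cmat_def by simp



lemma cmat_mult: "M \<in> carrier_mat 5 5 \<Longrightarrow> N \<in> carrier_mat 5 5 \<Longrightarrow>
  cmat j (M * N) = cmat j M * cmat j N"
proof (rule eq_matI)
  fix i k assume MN: "M \<in> carrier_mat 5 5" "N \<in> carrier_mat 5 5"
    and i: "i < dim_row (cmat j M * cmat j N)" and k: "k < dim_col (cmat j M * cmat j N)"
  have i5: "i < 5" and k5: "k < 5" using i k by auto
  have "(cmat j M * cmat j N) $$ (i,k) = (\<Sum>l<5. cmat j M $$ (i,l) * cmat j N $$ (l,k))"
    using mult5[OF cmat_carrier cmat_carrier i5 k5] .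
  also have "\<dots> = (\<Sum>l<5. dd j i * (of_int (M $$ (i,l)) * of_int (N $$ (l,k))) / dd j k)"
    using i5 k5 dd_nz by (intro sum.cong) (auto simp: cmat_idx field_simps)
  also have "\<dots> = dd j i * of_int (\<Sum>l<5. M $$ (i,l) * N $$ (l,k)) / dd j k"
    by (simp add: sum_divide_distrib sum_distrib_left)
  also have "\<dots> = cmat j (M * N) $$ (i,k)"
    using mult5[OF MN i5 k5] i5 k5 by (simp add: cmat_idx)
  finally show "cmat j (M * N) $$ (i,k) = (cmat j M * cmat j N) $$ (i,k)" by simp
qed (auto simp: cmat_def)

lemma cmat_one: "cmat j (1\<^sub>m 5) = 1\<^sub>m 5"
  by (rule eq_matI) (auto simp: cmat_def dd_nz)

lemma cmat_smult_one: "cmat j (c \<cdot>\<^sub>m 1\<^sub>m 5) = of_int c \<cdot>\<^sub>m 1\<^sub>m 5"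
  by (rule eq_matI) (auto simp: cmat_def dd_nz)

lemma cmat_inj: "M \<in> carrier_mat 5 5 \<Longrightarrow> N \<in> carrier_mat 5 5 \<Longrightarrow> cmat j M = cmat j N \<Longrightarrow> M = N"
proof (rule eq_matI)
  fix i k assume MN: "M \<in> carrier_mat 5 5" "N \<in> carrier_mat 5 5" "cmat j M = cmat j N"
    and i: "i < dim_row N" and k: "k < dim_col N"
  then have i5: "i < 5" and k5: "k < 5" by auto
  have "cmat j M $$ (i,k) = cmat j N $$ (i,k)" using MN by simp
  then have "dd j i * of_int (M $$ (i,k)) / dd j k = dd j i * of_int (N $$ (i,k)) / dd j k"
    using i5 k5 by (simp add: cmat_idx)
  then have "(of_int (M $$ (i,k)) :: complex) = of_int (N $$ (i,k))" using dd_nz[of j i] dd_nz[of j k] by simp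
  then show "M $$ (i,k) = N $$ (i,k)" by simp
qed auto



lemma O_div3:
  assumes j: "j \<le> 4" and M: "M \<in> carrier (O_Psi j)" and ik: "i < 5 - j" "5 - j \<le> k" "k < 5"
  shows "3 dvd M $$ (i,k)"
proof -
  obtain N where N: "N \<in> carrier_mat 5 5" "N * M = 1\<^sub>m 5" "M * N = 1\<^sub>m 5" using M carrier_O by blast
  have "psi_coeff j k * N $$ (k,i) = psi_coeff j i * M $$ (i,k)"
    using O_dual[OF M N(1) N(3), of k i] ik by auto
  moreover have "psi_coeff j k = 3" using ik unfolding psi_coeff_def by auto
  moreover have "psi_coeff j i = 1 \<or> psi_coeff j i = -1" unfolding psi_coeff_def using ik by auto
  ultimately have "3 * N $$ (k,i) = M $$ (i,k) \<or> 3 * N $$ (k,i) = - M $$ (i,k)" by auto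
  then show ?thesis
  proof
    assume "3 * N $$ (k,i) = M $$ (i,k)" then show ?thesis by (metis dvd_triv_left)
  next
    assume "3 * N $$ (k,i) = - M $$ (i,k)" then have "M $$ (i,k) = 3 * (- N $$ (k,i))" by simp
    then show ?thesis by (metis dvd_triv_left)
  qed
qed

lemma cmat_Eis:
  assumes j: "j \<le> 4" and M: "M \<in> carrier (O_Psi j)"
  shows "cmat j M \<in> Eis_mat"
  unfolding Eis_mat_def
proof (intro CollectI conjI allI impI)
  show "cmat j M \<in> carrier_mat 5 5" by (rule cmat_carrier)
  fix i k :: nat assume i: "i < 5" and k: "k < 5"
  show "cmat j M $$ (i,k) \<in> Eis"
  proof (cases "i < 5 - j \<and> 5 - j \<le> k")
    case True
    then obtain n where n: "M $$ (i,k) = 3 * n" using O_div3[OF j M, of i k] k by (auto elim: dvdE)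
    have "cmat j M $$ (i,k) = of_int (3 * n) / theta" using True i k n by (simp add: cmat_idx dd_def)
    also have "\<dots> = - of_int n * theta"
    proof -
      have "(- of_int n * theta) * theta = - of_int n * (theta * theta)" by (simp add: mult.assoc)
      also have "\<dots> = of_int (3 * n)" using theta_sq by simp
      finally show ?thesis using theta_nz by (simp add: divide_eq_eq)
    qed
    finally show ?thesis using Eis_mult[OF Eis_uminus[OF Eis_int[of n]] Eis_theta] by simp
  next
    case False
    then have "cmat j M $$ (i,k) = of_int (M $$ (i,k)) \<or> cmat j M $$ (i,k) = theta * of_int (M $$ (i,k))"
      using i k theta_nz by (auto simp: cmat_idx dd_def)
    then show ?thesis using Eis_int Eis_mult[OF Eis_theta Eis_int] by auto
  qed
qed



lemma herm_expand:
  assumes A: "A \<in> carrier_mat 5 5" and x: "x \<in> carrier_vec 5" and y: "y \<in> carrier_vec 5"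
  shows "herm (A *\<^sub>v x) (A *\<^sub>v y) =
    (\<Sum>k<5. \<Sum>l<5. x $ k * cnj (y $ l) * (\<Sum>i<5. hh i * A $$ (i,k) * cnj (A $$ (i,l))))"
proof -
  have "herm (A *\<^sub>v x) (A *\<^sub>v y) = (\<Sum>i<5. hh i * (\<Sum>k<5. A $$ (i,k) * x $ k) * cnj (\<Sum>l<5. A $$ (i,l) * y $ l))"
    unfolding herm_hh using A x y by (intro sum.cong) (auto simp del: index_mult_mat_vec simp add: multv5)
  also have "\<dots> = (\<Sum>i<5. \<Sum>k<5. \<Sum>l<5. x $ k * cnj (y $ l) * (hh i * A $$ (i,k) * cnj (A $$ (i,l))))"
    by (simp add: sum_distrib_left sum_distrib_right cnj_sum mult_ac)
  also have "\<dots> = (\<Sum>k<5. \<Sum>i<5. \<Sum>l<5. x $ k * cnj (y $ l) * (hh i * A $$ (i,k) * cnj (A $$ (i,l))))"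
    by (rule sum.swap)
  also have "\<dots> = (\<Sum>k<5. \<Sum>l<5. \<Sum>i<5. x $ k * cnj (y $ l) * (hh i * A $$ (i,k) * cnj (A $$ (i,l))))"
    by (rule sum.cong[OF refl], rule sum.swap)
  also have "\<dots> = (\<Sum>k<5. \<Sum>l<5. x $ k * cnj (y $ l) * (\<Sum>i<5. hh i * A $$ (i,k) * cnj (A $$ (i,l))))"
    by (simp add: sum_distrib_left)
  finally show ?thesis .
qed

lemma herm_pres_gram:
  assumes A: "A \<in> carrier_mat 5 5"
    and G: "\<And>k l. k < 5 \<Longrightarrow> l < 5 \<Longrightarrow> (\<Sum>i<5. hh i * A $$ (i,k) * cnj (A $$ (i,l))) = (if k = l then hh k else 0)"
    and x: "x \<in> carrier_vec 5" and y: "y \<in> carrier_vec 5"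
  shows "herm (A *\<^sub>v x) (A *\<^sub>v y) = herm x y"
proof -
  have "herm (A *\<^sub>v x) (A *\<^sub>v y) = (\<Sum>k<5. \<Sum>l<5. (if l = k then x $ k * cnj (y $ l) * hh k else 0))"
    unfolding herm_expand[OF A x y] using G by (intro sum.cong) auto
  also have "\<dots> = (\<Sum>k<5. x $ k * cnj (y $ k) * hh k)"
    by (intro sum.cong[OF refl]) (simp add: sum.delta)
  also have "\<dots> = herm x y" unfolding herm_hh by (simp add: mult_ac)
  finally show ?thesis .
qed



lemma cmat_gram:
  assumes j: "j \<le> 4" and M: "M \<in> carrier (O_Psi j)" and kl: "k < 5" "l < 5"
  shows "(\<Sum>i<5. hh i * cmat j M $$ (i,k) * cnj (cmat j M $$ (i,l))) = (if k = l then hh k else 0)"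
proof -
  have "(\<Sum>i<5. hh i * cmat j M $$ (i,k) * cnj (cmat j M $$ (i,l)))
      = (\<Sum>i<5. of_int (psi_coeff j i * M $$ (i,k) * M $$ (i,l)) / (dd j k * cnj (dd j l)))"
  proof (rule sum.cong[OF refl])
    fix i assume "i \<in> {..<5::nat}"
    then have i: "i < 5" by simp
    have "hh i * cmat j M $$ (i,k) * cnj (cmat j M $$ (i,l))
        = (hh i * dd j i * cnj (dd j i)) * of_int (M $$ (i,k) * M $$ (i,l)) / (dd j k * cnj (dd j l))"
      using i kl by (simp add: cmat_idx field_simps)
    also have "\<dots> = of_int (psi_coeff j i * M $$ (i,k) * M $$ (i,l)) / (dd j k * cnj (dd j l))"
      using hh_dd[OF j, of i] by simp
    finally show "hh i * cmat j M $$ (i,k) * cnj (cmat j M $$ (i,l))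
        = of_int (psi_coeff j i * M $$ (i,k) * M $$ (i,l)) / (dd j k * cnj (dd j l))" .
  qed
  also have "\<dots> = of_int (\<Sum>i<5. psi_coeff j i * M $$ (i,k) * M $$ (i,l)) / (dd j k * cnj (dd j l))"
    by (simp add: sum_divide_distrib)
  also have "\<dots> = of_int (if k = l then psi_coeff j k else 0) / (dd j k * cnj (dd j l))"
    using O_gram[OF M kl] by simp
  also have "\<dots> = (if k = l then hh k else 0)"
  proof (cases "k = l")
    case True
    have nz: "dd j k * cnj (dd j k) \<noteq> 0" using dd_nz[of j k] by simp
    have "complex_of_int (psi_coeff j k) = hh k * (dd j k * cnj (dd j k))"
      using hh_dd[OF j, of k] by (simp add: mult.assoc)
    then show ?thesis using True nz by simp
  qed simp
  finally show ?thesis .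
qed

lemma cmat_herm: "j \<le> 4 \<Longrightarrow> M \<in> carrier (O_Psi j) \<Longrightarrow> x \<in> carrier_vec 5 \<Longrightarrow> y \<in> carrier_vec 5 \<Longrightarrow>
  herm (cmat j M *\<^sub>v x) (cmat j M *\<^sub>v y) = herm x y"
  using herm_pres_gram[OF cmat_carrier cmat_gram] by blast



lemma cmat_xi:
  assumes x: "x \<in> carrier_vec 5"
  shows "xi j (cmat j M *\<^sub>v x) = cmat j M *\<^sub>v xi j x"
proof (rule eq_vecI)
  fix i assume "i < dim_vec (cmat j M *\<^sub>v xi j x)"
  then have i: "i < 5" by auto
  have "xi j (cmat j M *\<^sub>v x) $ i = sg j i * cnj (\<Sum>k<5. cmat j M $$ (i,k) * x $ k)"
    using xi_idx[OF i] multv5[OF cmat_carrier x i] by simp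
  also have "\<dots> = (\<Sum>k<5. cmat j M $$ (i,k) * (sg j k * cnj (x $ k)))"
    unfolding cnj_sum sum_distrib_left
  proof (rule sum.cong[OF refl])
    fix k assume "k \<in> {..<5::nat}"
    then have k: "k < 5" by simp
    have si: "sg j i = 1 \<or> sg j i = -1" and sk: "sg j k = 1 \<or> sg j k = -1" unfolding sg_def by auto
    have "sg j i * cnj (cmat j M $$ (i, k)) = cmat j M $$ (i,k) * sg j k"
      using si sk i k by (elim disjE) (simp_all add: cmat_idx cnj_dd)
    then show "sg j i * cnj (cmat j M $$ (i, k) * x $ k) = cmat j M $$ (i, k) * (sg j k * cnj (x $ k))"
      by (simp add: mult_ac)
  qed
  also have "\<dots> = (cmat j M *\<^sub>v xi j x) $ i"
    using multv5[OF cmat_carrier xi_carrier i] xi_idx by simp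
  finally show "xi j (cmat j M *\<^sub>v x) $ i = (cmat j M *\<^sub>v xi j x) $ i" .
qed (simp add: xi_def cmat_carrier)



lemma smult_smult_mat: "a \<cdot>\<^sub>m (b \<cdot>\<^sub>m A) = (a * b :: 'a :: semiring_0) \<cdot>\<^sub>m A"
  by (rule eq_matI) (auto simp: mult.assoc)

lemma smult_mat_vec5: "A \<in> carrier_mat 5 5 \<Longrightarrow> x \<in> carrier_vec 5 \<Longrightarrow> (u \<cdot>\<^sub>m A) *\<^sub>v x = u \<cdot>\<^sub>v (A *\<^sub>v x)"
  by (rule eq_vecI) (auto simp del: index_mult_mat_vec simp add: multv5 sum_distrib_left mult_ac)

definition good :: "nat \<Rightarrow> complex mat \<Rightarrow> bool" where
  "good j A = (A \<in> carrier_mat 5 5 \<and> herm_pres A \<and>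
     (\<exists>lam. \<forall>x \<in> carrier_vec 5. xi j (A *\<^sub>v x) = lam \<cdot>\<^sub>v (A *\<^sub>v xi j x)))"

lemma good_cmat: "j \<le> 4 \<Longrightarrow> M \<in> carrier (O_Psi j) \<Longrightarrow> good j (cmat j M)"
  unfolding good_def herm_pres_def using cmat_carrier cmat_herm cmat_xi
  by (auto intro!: exI[of _ 1])

lemma good_smult: assumes g: "good j A" and u: "u \<in> Eis_units" shows "good j (u \<cdot>\<^sub>m A)"
proof -
  have A: "A \<in> carrier_mat 5 5" and h: "herm_pres A" using g unfolding good_def by auto
  obtain lam where lam: "\<And>x. x \<in> carrier_vec 5 \<Longrightarrow> xi j (A *\<^sub>v x) = lam \<cdot>\<^sub>v (A *\<^sub>v xi j x)"
    using g unfolding good_def by auto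
  have n: "u * cnj u = 1" "cnj u * u = 1" using Eis_unit_norm[OF u] by (auto simp: mult.commute)
  have "herm_pres (u \<cdot>\<^sub>m A)" unfolding herm_pres_def
  proof
    fix x :: "complex vec" assume x: "x \<in> carrier_vec 5"
    have "herm ((u \<cdot>\<^sub>m A) *\<^sub>v x) ((u \<cdot>\<^sub>m A) *\<^sub>v x) = u * cnj u * herm (A *\<^sub>v x) (A *\<^sub>v x)"
      using smult_mat_vec5[OF A x] herm_smult[of "A *\<^sub>v x" "A *\<^sub>v x" u u] A x by simp
    then show "herm ((u \<cdot>\<^sub>m A) *\<^sub>v x) ((u \<cdot>\<^sub>m A) *\<^sub>v x) = herm x x"
      using h x n unfolding herm_pres_def by simp
  qed
  moreover have "xi j ((u \<cdot>\<^sub>m A) *\<^sub>v x) = (cnj u * cnj u * lam) \<cdot>\<^sub>v ((u \<cdot>\<^sub>m A) *\<^sub>v xi j x)"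
    if x: "x \<in> carrier_vec 5" for x
  proof -
    have "xi j ((u \<cdot>\<^sub>m A) *\<^sub>v x) = cnj u \<cdot>\<^sub>v (lam \<cdot>\<^sub>v (A *\<^sub>v xi j x))"
      using smult_mat_vec5[OF A x] xi_smult[of "A *\<^sub>v x" j u] lam[OF x] A x by simp
    also have "\<dots> = (cnj u * cnj u * lam) \<cdot>\<^sub>v (u \<cdot>\<^sub>v (A *\<^sub>v xi j x))"
      by (simp add: smult_smult_assoc mult_ac) (metis (no_types, lifting) mult.assoc mult_1 n(2) mult.commute)
    also have "\<dots> = (cnj u * cnj u * lam) \<cdot>\<^sub>v ((u \<cdot>\<^sub>m A) *\<^sub>v xi j x)"
      using smult_mat_vec5[OF A xi_carrier] by simp
    finally show ?thesis .
  qed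
  ultimately show ?thesis unfolding good_def using A by auto
qed

lemma good_stab:
  assumes gA: "good j A" and gC: "good j C" and AC: "A * C = 1\<^sub>m 5"
  shows "act_line A ` H4 j = H4 j"
proof -
  have A: "A \<in> carrier_mat 5 5" and C: "C \<in> carrier_mat 5 5" using gA gC unfolding good_def by auto
  have sA: "act_line A ` H4 j \<subseteq> H4 j"
    using gA stab_into unfolding good_def by blast
  have sC: "act_line C ` H4 j \<subseteq> H4 j"
    using gC stab_into unfolding good_def by blast
  have "act_line A ` (act_line C ` H4 j) = act_line (A * C) ` H4 j"
    using act_line_mult_H4[OF A C] by simp
  also have "\<dots> = H4 j" using AC act_line_scalar[of 1, unfolded so] by simp
  finally have "H4 j \<subseteq> act_line A ` H4 j" using sC by blast
  then show ?thesis using sA by blast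
qed

definition Phi :: "nat \<Rightarrow> int mat \<Rightarrow> complex mat set" where
  "Phi j M = unit_scalars #>\<^bsub>Gamma\<^esub> cmat j M"

lemma cmat_Gamma:
  assumes j: "j \<le> 4" and M: "M \<in> carrier (O_Psi j)"
  shows "cmat j M \<in> Gamma_carrier"
proof -
  obtain N where N: "N \<in> carrier_mat 5 5" "N * M = 1\<^sub>m 5" "M * N = 1\<^sub>m 5" using M carrier_O by blast
  have NO: "N \<in> carrier (O_Psi j)" using O_inv[OF M N] .
  have cM: "M \<in> carrier_mat 5 5" using M by (rule O_cmat)
  have "cmat j N * cmat j M = 1\<^sub>m 5" "cmat j M * cmat j N = 1\<^sub>m 5"
    using cmat_mult[OF N(1) cM] cmat_mult[OF cM N(1)] N cmat_one by auto
  moreover have "\<forall>x \<in> Lambda. \<forall>y \<in> Lambda. herm (cmat j M *\<^sub>v x) (cmat j M *\<^sub>v y) = herm x y"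
    using cmat_herm[OF j M] unfolding Lambda_def by auto
  ultimately show ?thesis unfolding Gamma_carrier_def using cmat_Eis[OF j M] cmat_Eis[OF j NO] by blast
qed

lemma coset_elem:
  assumes "B \<in> unit_scalars #>\<^bsub>Gamma\<^esub> A" and "A \<in> carrier_mat 5 5"
  shows "\<exists>u \<in> Eis_units. B = u \<cdot>\<^sub>m A"
  using assms unfolding r_coset_def unit_scalars_def mult_Gamma
  by (auto simp: smult_one_mult)

lemma carrier_PGamma: "carrier PGamma = rcosets\<^bsub>Gamma\<^esub> unit_scalars"
  unfolding PGamma_def FactGroup_def by simp

lemma Phi_Stab:
  assumes j: "j \<le> 4" and M: "M \<in> carrier (O_Psi j)"
  shows "Phi j M \<in> Stab j"
proof -
  interpret G: group Gamma by (rule group_Gamma)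
  obtain N where N: "N \<in> carrier_mat 5 5" "N * M = 1\<^sub>m 5" "M * N = 1\<^sub>m 5" using M carrier_O by blast
  have NO: "N \<in> carrier (O_Psi j)" using O_inv[OF M N] .
  have cM: "M \<in> carrier_mat 5 5" using M by (rule O_cmat)
  have MNc: "cmat j M * cmat j N = 1\<^sub>m 5" using cmat_mult[OF cM N(1)] N cmat_one by auto
  have "Phi j M \<in> carrier PGamma"
    unfolding carrier_PGamma Phi_def
    using G.rcosetsI[of unit_scalars "cmat j M"] unit_scalars_sub cmat_Gamma[OF j M] carrier_Gamma by auto
  moreover have "act_line B ` H4 j = H4 j" if B: "B \<in> Phi j M" for B
  proof -
    obtain u where u: "u \<in> Eis_units" "B = u \<cdot>\<^sub>m cmat j M"
      using coset_elem[OF B[unfolded Phi_def] cmat_carrier] by blast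
    have "B * (cnj u \<cdot>\<^sub>m cmat j N) = (u * cnj u) \<cdot>\<^sub>m (cmat j M * cmat j N)"
      using u(2) cmat_carrier[of j M] cmat_carrier[of j N]
      by (simp add: mult_smult_assoc_mat[of _ 5 5 _ 5] mult_smult_distrib[of _ 5 5 _ 5] smult_smult_mat mult.commute)
    also have "\<dots> = 1\<^sub>m 5" using MNc Eis_unit_norm[OF u(1)] by (simp add: so)
    finally have BC: "B * (cnj u \<cdot>\<^sub>m cmat j N) = 1\<^sub>m 5" .
    show ?thesis
      using good_stab[OF _ _ BC] good_smult[OF good_cmat[OF j M] u(1)] good_smult[OF good_cmat[OF j NO] units_cnj[OF u(1)]] u(2)
      by simp
  qed
  ultimately show ?thesis unfolding Stab_def by blast
qed

lemma carrier_PGammaR: "carrier (PGammaR j) = Stab j" unfolding PGammaR_eq by simp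
lemma mult_PGammaR: "X \<otimes>\<^bsub>PGammaR j\<^esub> Y = X <#>\<^bsub>Gamma\<^esub> Y"
  unfolding PGammaR_eq PGamma_def FactGroup_def by simp
lemma one_PGammaR: "\<one>\<^bsub>PGammaR j\<^esub> = unit_scalars"
  unfolding PGammaR_eq PGamma_def FactGroup_def by simp

lemma Phi_hom: "j \<le> 4 \<Longrightarrow> Phi j \<in> hom (O_Psi j) (PGammaR j)"
proof (rule homI)
  fix M assume "j \<le> 4" "M \<in> carrier (O_Psi j)"
  then show "Phi j M \<in> carrier (PGammaR j)" using Phi_Stab carrier_PGammaR by auto
next
  fix M N assume j: "j \<le> 4" and M: "M \<in> carrier (O_Psi j)" and N: "N \<in> carrier (O_Psi j)"
  interpret Nm: normal unit_scalars Gamma by (rule normal_U)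
  have "Phi j M \<otimes>\<^bsub>PGammaR j\<^esub> Phi j N = unit_scalars #>\<^bsub>Gamma\<^esub> (cmat j M \<otimes>\<^bsub>Gamma\<^esub> cmat j N)"
    unfolding mult_PGammaR Phi_def
    using Nm.rcos_sum cmat_Gamma[OF j M] cmat_Gamma[OF j N] carrier_Gamma by auto
  also have "\<dots> = Phi j (M \<otimes>\<^bsub>O_Psi j\<^esub> N)"
    unfolding Phi_def mult_Gamma mult_O using cmat_mult O_cmat M N by auto
  finally show "Phi j (M \<otimes>\<^bsub>O_Psi j\<^esub> N) = Phi j M \<otimes>\<^bsub>PGammaR j\<^esub> Phi j N" by simp
qed

lemma neg_one_O: "(-1) \<cdot>\<^sub>m 1\<^sub>m 5 \<in> carrier (O_Psi j)"
proof -
  have e: "((-1) \<cdot>\<^sub>m 1\<^sub>m 5) * ((-1) \<cdot>\<^sub>m 1\<^sub>m 5) = (1\<^sub>m 5 :: int mat)"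
  proof (rule eq_matI)
    fix i k assume "i < dim_row (1\<^sub>m 5 :: int mat)" "k < dim_col (1\<^sub>m 5 :: int mat)"
    then show "(((-1) \<cdot>\<^sub>m 1\<^sub>m 5) * ((-1) \<cdot>\<^sub>m 1\<^sub>m 5)) $$ (i,k) = (1\<^sub>m 5 :: int mat) $$ (i,k)"
      by (simp del: index_mult_mat add: mult5 if_distrib[of "\<lambda>t. t * _"] cong: if_cong)
  qed auto
  have "Psi j (((-1) \<cdot>\<^sub>m 1\<^sub>m 5) *\<^sub>v y) = Psi j y" if "y \<in> carrier_vec 5" for y
  proof -
    have "((-1) \<cdot>\<^sub>m 1\<^sub>m 5) *\<^sub>v y = (-1) \<cdot>\<^sub>v y" using that
      by (intro eq_vecI) (auto simp del: index_mult_mat_vec simp add: multv5 if_distrib[of "\<lambda>t. t * _"] sum_negf cong: if_cong)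
    then show ?thesis using that unfolding Psi_def by simp
  qed
  then show ?thesis unfolding carrier_O using e by (auto intro!: bexI[of _ "(-1) \<cdot>\<^sub>m 1\<^sub>m 5"])
qed

lemma unit_int: assumes "u \<in> Eis_units" "u = of_int n" shows "u = 1 \<or> u = -1"
proof -
  have "Im u = 0" using assms(2) by simp
  then show ?thesis using Eis_units_cases[OF assms(1)] by (auto simp: omega_eq)
qed

lemma Phi_kernel: assumes j: "j \<le> 4"
  shows "kernel (O_Psi j) (PGammaR j) (Phi j) = {1\<^sub>m 5, (-1) \<cdot>\<^sub>m 1\<^sub>m 5}"
proof -
  interpret G: group Gamma by (rule group_Gamma)
  interpret S: subgroup unit_scalars Gamma by (rule subgroup_U)
  have "M \<in> {1\<^sub>m 5, (-1) \<cdot>\<^sub>m 1\<^sub>m 5}" if M: "M \<in> carrier (O_Psi j)" "Phi j M = unit_scalars" for M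
  proof -
    have cM: "M \<in> carrier_mat 5 5" using M(1) by (rule O_cmat)
    have "cmat j M \<in> unit_scalars" using G.rcos_self[OF _ subgroup_U, of "cmat j M"] M(2) cmat_Gamma[OF j M(1)]
      unfolding Phi_def carrier_Gamma by simp
    then obtain u where u: "u \<in> Eis_units" "cmat j M = u \<cdot>\<^sub>m 1\<^sub>m 5" unfolding unit_scalars_def by auto
    have "cmat j M $$ (0,0) = of_int (M $$ (0,0))" by (simp add: cmat_idx dd_nz)
    then have "u = of_int (M $$ (0,0))" using u(2) by simp
    then have "u = 1 \<or> u = -1" using unit_int u(1) by blast
    then show ?thesis
    proof
      assume "u = 1"
      then have "cmat j M = cmat j (1\<^sub>m 5)" using u(2) cmat_one so by simp
      then show ?thesis using cmat_inj[OF cM] by auto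
    next
      assume "u = -1"
      then have "cmat j M = cmat j ((-1) \<cdot>\<^sub>m 1\<^sub>m 5)" using u(2) cmat_smult_one[of j "-1"] by simp
      then show ?thesis using cmat_inj[OF cM] by auto
    qed
  qed
  moreover have "Phi j (1\<^sub>m 5) = unit_scalars"
    unfolding Phi_def cmat_one using G.coset_mult_one[of unit_scalars] S.subset one_Gamma by simp
  moreover have "Phi j ((-1) \<cdot>\<^sub>m 1\<^sub>m 5) = unit_scalars"
  proof -
    have "(-1::complex) \<in> Eis_units" unfolding Eis_units_def
      using Eis_uminus[OF Eis_1] by (auto intro!: bexI[of _ "-1"])
    then have "cmat j ((-1) \<cdot>\<^sub>m 1\<^sub>m 5) \<in> unit_scalars"
      unfolding unit_scalars_def cmat_smult_one by auto
    then show ?thesis unfolding Phi_def using S.rcos_const[OF group_Gamma] by simp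
  qed
  ultimately show ?thesis unfolding kernel_def one_PGammaR using O_one neg_one_O by auto
qed


definition Kmap :: "nat \<Rightarrow> complex mat \<Rightarrow> complex mat" where
  "Kmap j A = mat 5 5 (\<lambda>(i,k). sg j i * sg j k * cnj (A $$ (i,k)))"

lemma Kmap_carrier: "Kmap j A \<in> carrier_mat 5 5" unfolding Kmap_def by simp
lemma dim_Kmap[simp]: "dim_row (Kmap j A) = 5" "dim_col (Kmap j A) = 5" unfolding Kmap_def by auto
lemma Kmap_idx: "i < 5 \<Longrightarrow> k < 5 \<Longrightarrow> Kmap j A $$ (i,k) = sg j i * sg j k * cnj (A $$ (i,k))"
  unfolding Kmap_def by simp

lemma Kmap_vec:
  assumes A: "A \<in> carrier_mat 5 5" and x: "x \<in> carrier_vec 5"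
  shows "Kmap j A *\<^sub>v x = xi j (A *\<^sub>v xi j x)"
proof (rule eq_vecI)
  fix i assume "i < dim_vec (xi j (A *\<^sub>v xi j x))"
  then have i: "i < 5" by (simp add: xi_def)
  have "xi j (A *\<^sub>v xi j x) $ i = sg j i * cnj (\<Sum>k<5. A $$ (i,k) * (sg j k * cnj (x $ k)))"
    using xi_idx[OF i] multv5[OF A xi_carrier i] xi_idx by simp
  also have "\<dots> = (\<Sum>k<5. Kmap j A $$ (i,k) * x $ k)"
    unfolding cnj_sum sum_distrib_left
    by (intro sum.cong[OF refl]) (auto simp: Kmap_idx i cnj_sg mult_ac)
  also have "\<dots> = (Kmap j A *\<^sub>v x) $ i" using multv5[OF Kmap_carrier x i] by simp
  finally show "(Kmap j A *\<^sub>v x) $ i = xi j (A *\<^sub>v xi j x) $ i" by simp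
qed (simp add: xi_def)

lemma Kmap_mult:
  assumes A: "A \<in> carrier_mat 5 5" and B: "B \<in> carrier_mat 5 5"
  shows "Kmap j (A * B) = Kmap j A * Kmap j B"
proof (rule eq_matI)
  fix i k assume "i < dim_row (Kmap j A * Kmap j B)" "k < dim_col (Kmap j A * Kmap j B)"
  then have i: "i < 5" and k: "k < 5" by auto
  have "(Kmap j A * Kmap j B) $$ (i,k) = (\<Sum>l<5. Kmap j A $$ (i,l) * Kmap j B $$ (l,k))"
    using mult5[OF Kmap_carrier Kmap_carrier i k] .
  also have "\<dots> = (\<Sum>l<5. sg j i * sg j k * cnj (A $$ (i,l) * B $$ (l,k)))"
  proof (intro sum.cong[OF refl])
    fix l assume "l \<in> {..<5::nat}"
    then have l: "l < 5" by simp
    have "Kmap j A $$ (i,l) * Kmap j B $$ (l,k) = sg j i * sg j k * (sg j l * sg j l) * cnj (A $$ (i,l) * B $$ (l,k))"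
      using i k l by (simp add: Kmap_idx mult_ac)
    then show "Kmap j A $$ (i,l) * Kmap j B $$ (l,k) = sg j i * sg j k * cnj (A $$ (i,l) * B $$ (l,k))"
      by (simp add: sg_sq)
  qed
  also have "\<dots> = sg j i * sg j k * cnj (\<Sum>l<5. A $$ (i,l) * B $$ (l,k))"
    by (simp add: sum_distrib_left cnj_sum)
  also have "\<dots> = Kmap j (A * B) $$ (i,k)"
    using i k mult5[OF A B i k] by (simp add: Kmap_idx)
  finally show "Kmap j (A * B) $$ (i,k) = (Kmap j A * Kmap j B) $$ (i,k)" by simp
qed auto

lemma Kmap_one: "Kmap j (1\<^sub>m 5) = 1\<^sub>m 5"
  by (rule eq_matI) (auto simp: Kmap_idx sg_sq)

lemma Kmap_inv:
  assumes A: "A \<in> carrier_mat 5 5" and N: "N \<in> carrier_mat 5 5" "N * A = 1\<^sub>m 5" "A * N = 1\<^sub>m 5"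
    and K: "Kmap j A = A"
  shows "Kmap j N = N"
proof -
  have "Kmap j N = Kmap j N * (A * N)" using N(3) Kmap_carrier[of j N] by simp
  also have "\<dots> = (Kmap j N * Kmap j A) * N" using K A N(1) Kmap_carrier[of j N]
    by (simp add: assoc_mult_mat[of _ 5 5 _ 5 _ 5])
  also have "\<dots> = Kmap j (N * A) * N" using Kmap_mult[OF N(1) A] by simp
  also have "\<dots> = N" using N(2) Kmap_one N(1) by simp
  finally show ?thesis .
qed

lemma Kmap_Eis: "A \<in> Eis_mat \<Longrightarrow> Kmap j A \<in> Eis_mat"
  unfolding Eis_mat_def using Kmap_carrier
  by (auto simp: Kmap_idx sg_def intro!: Eis_cnj Eis_uminus)

lemma stab_eig:
  assumes g: "g \<in> carrier_mat 5 5" and st: "act_line g ` H4 j = H4 j"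
    and v: "v \<in> carrier_vec 5" "xi j v = v" "Re (herm v v) < 0"
  shows "\<exists>lam. xi j (g *\<^sub>v v) = lam \<cdot>\<^sub>v (g *\<^sub>v v)"
proof -
  have "cline v \<in> H4 j" unfolding H4_iff using v by (intro exI[of _ v]) (auto intro!: exI[of _ 1])
  then have "cline (g *\<^sub>v v) \<in> H4 j" using st act_line_cline[OF g v(1)] by blast
  then obtain w e where w: "cline (g *\<^sub>v v) = cline w" "w \<in> carrier_vec 5" "xi j w = e \<cdot>\<^sub>v w"
    unfolding H4_iff by blast
  have "g *\<^sub>v v \<in> cline (g *\<^sub>v v)" unfolding cline_def by (auto intro!: exI[of _ 1])
  then obtain c where c: "g *\<^sub>v v = c \<cdot>\<^sub>v w" using w(1) unfolding cline_def by auto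
  define lam where "lam = (if c = 0 then 0 else cnj c * e / c)"
  have lc: "lam * c = cnj c * e" unfolding lam_def by auto
  have "xi j (g *\<^sub>v v) = (cnj c * e) \<cdot>\<^sub>v w" using c xi_smult[OF w(2)] w(3) by (simp add: smult_smult_assoc)
  also have "\<dots> = lam \<cdot>\<^sub>v (g *\<^sub>v v)" using c lc by (simp add: smult_smult_assoc)
  finally show ?thesis by blast
qed


definition vv :: "nat \<Rightarrow> nat \<Rightarrow> complex \<Rightarrow> complex vec" where
  "vv j i s = vec 5 (\<lambda>k. if k = 0 then 2 else if k = i then s * dd j i else 0)"

lemma vv_carrier: "vv j i s \<in> carrier_vec 5" unfolding vv_def by simp

lemma sum5_two:
  fixes i :: nat
  assumes "0 < i" "i < 5"
  shows "(\<Sum>l<5. (if l = 0 then a else if l = i then b else 0) * f l) = a * f 0 + b * (f i :: complex)"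
proof -
  have "(\<Sum>l<5. (if l = 0 then a else if l = i then b else 0) * f l)
     = (\<Sum>l<5::nat. (if l = 0 then a * f 0 else 0) + (if l = i then b * f i else 0))"
    using assms by (intro sum.cong) auto
  also have "\<dots> = a * f 0 + b * f i" using assms by (simp add: sum.distrib)
  finally show ?thesis .
qed

lemma vv_mult:
  assumes A: "A \<in> carrier_mat 5 5" and i: "0 < i" "i < 5" and k: "k < 5"
  shows "(A *\<^sub>v vv j i s) $ k = 2 * A $$ (k,0) + s * dd j i * A $$ (k,i)"
proof -
  have "(A *\<^sub>v vv j i s) $ k = (\<Sum>l<5. A $$ (k,l) * vv j i s $ l)" using multv5[OF A vv_carrier k] .
  also have "\<dots> = (\<Sum>l<5. (if l = 0 then 2 else if l = i then s * dd j i else 0) * A $$ (k,l))"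
    by (intro sum.cong[OF refl]) (simp add: vv_def mult.commute)
  also have "\<dots> = 2 * A $$ (k,0) + s * dd j i * A $$ (k,i)" using sum5_two[OF i] by simp
  finally show ?thesis .
qed

lemma sg0: "j \<le> 4 \<Longrightarrow> sg j 0 = 1" unfolding sg_def by auto

lemma vv_xi:
  assumes j: "j \<le> 4" and s: "s = 1 \<or> s = -1"
  shows "xi j (vv j i s) = vv j i s"
proof (rule eq_vecI)
  fix k assume "k < dim_vec (vv j i s)"
  then have k: "k < 5" by (simp add: vv_def)
  have e: "sg j k * cnj (dd j k) = dd j k" by (simp add: cnj_dd mult.assoc[symmetric] sg_sq)
  have "sg j k * cnj (s * dd j k) = s * dd j k" using s
  proof
    assume "s = 1" then show ?thesis using e by simp
  next
    assume "s = -1" then show ?thesis using e by simp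
  qed
  then show "xi j (vv j i s) $ k = vv j i s $ k" using k sg0[OF j] by (auto simp: xi_idx vv_def)
qed (simp add: xi_def vv_def)

lemma dd_norm: "dd j i * cnj (dd j i) = 1 \<or> dd j i * cnj (dd j i) = 3"
  unfolding dd_def using cnj_theta theta_sq by auto

lemma vv_herm:
  assumes i: "0 < i" "i < 5" and s: "s = 1 \<or> s = -1"
  shows "Re (herm (vv j i s) (vv j i s)) < 0"
proof -
  have "herm (vv j i s) (vv j i s) = (\<Sum>l<5. (if l = 0 then -4 else if l = i then dd j i * cnj (dd j i) else 0) * 1)"
    unfolding herm_hh using i s by (intro sum.cong) (auto simp: vv_def hh_def)
  also have "\<dots> = -4 + dd j i * cnj (dd j i)" using sum5_two[OF i, of "-4" "dd j i * cnj (dd j i)" "\<lambda>_. 1"] by simp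
  finally have h: "herm (vv j i s) (vv j i s) = -4 + dd j i * cnj (dd j i)" .
  show ?thesis using dd_norm[of j i]
  proof
    assume "dd j i * cnj (dd j i) = 1" then have "herm (vv j i s) (vv j i s) = -3" using h by simp
    then show ?thesis by simp
  next
    assume "dd j i * cnj (dd j i) = 3" then have "herm (vv j i s) (vv j i s) = -1" using h by simp
    then show ?thesis by simp
  qed
qed

lemma dim_xi[simp]: "dim_vec (xi j v) = 5" unfolding xi_def by simp

lemma e0_xi: "j \<le> 4 \<Longrightarrow> xi j (unit_vec 5 0) = unit_vec 5 0"
  by (rule eq_vecI) (auto simp: xi_idx sg0)

lemma e0_herm: "Re (herm (unit_vec 5 0) (unit_vec 5 0)) < 0"
proof -
  have "herm (unit_vec 5 0) (unit_vec 5 0) = (\<Sum>l<5::nat. (if l = 0 then -1 else 0))"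
    unfolding herm_hh by (intro sum.cong) (auto simp: hh_def)
  then show ?thesis by simp
qed


lemma inj_cols:
  fixes g N :: "complex mat" and p q :: complex
  assumes g: "g \<in> carrier_mat 5 5" and N: "N \<in> carrier_mat 5 5" "N * g = 1\<^sub>m 5"
    and i: "0 < i" "i < 5" and h: "\<And>k. k < 5 \<Longrightarrow> g $$ (k,0) * p + g $$ (k,i) * q = 0"
  shows "p = 0 \<and> q = 0"
proof -
  have row: "(\<Sum>k<5. N $$ (m,k) * (g $$ (k,0) * p + g $$ (k,i) * q)) = (N * g) $$ (m,0) * p + (N * g) $$ (m,i) * q"
    if m: "m < 5" for m
    using mult5[OF N(1) g m, of 0] mult5[OF N(1) g m i(2)] i
    by (simp add: sum_distrib_right sum_distrib_left sum.distrib algebra_simps)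
  have z: "(\<Sum>k<5. N $$ (m,k) * (g $$ (k,0) * p + g $$ (k,i) * q)) = 0" for m
    using h by simp
  have "p = 0" using row[of 0] z[of 0] N(2) i by simp
  moreover have "q = 0" using row[of i] z[of i] N(2) i by simp
  ultimately show ?thesis ..
qed

lemma mu_exists:
  assumes j: "j \<le> 4" and g: "g \<in> carrier_mat 5 5" and N: "N \<in> carrier_mat 5 5" "N * g = 1\<^sub>m 5"
    and eig: "\<And>v. v \<in> carrier_vec 5 \<Longrightarrow> xi j v = v \<Longrightarrow> Re (herm v v) < 0 \<Longrightarrow>
       \<exists>lam. Kmap j g *\<^sub>v v = lam \<cdot>\<^sub>v (g *\<^sub>v v)"
  shows "\<exists>mu. Kmap j g = mu \<cdot>\<^sub>m g"
proof -
  let ?K = "Kmap j g"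
  obtain mu where mu: "?K *\<^sub>v unit_vec 5 0 = mu \<cdot>\<^sub>v (g *\<^sub>v unit_vec 5 0)"
    using eig[OF _ e0_xi[OF j] e0_herm] by auto
  have c0: "?K $$ (k,0) = mu * g $$ (k,0)" if k: "k < 5" for k
  proof -
    have "(?K *\<^sub>v unit_vec 5 0) $ k = (mu \<cdot>\<^sub>v (g *\<^sub>v unit_vec 5 0)) $ k" using mu by simp
    then show ?thesis using Pv_unit[OF Kmap_carrier, of 0 k] Pv_unit[OF g, of 0 k] k g by simp
  qed
  have ci: "?K $$ (k,i) = mu * g $$ (k,i)" if i: "0 < i" "i < 5" and k: "k < 5" for i k
  proof -
    obtain a where a: "?K *\<^sub>v vv j i 1 = a \<cdot>\<^sub>v (g *\<^sub>v vv j i 1)"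
      using eig[OF vv_carrier vv_xi[OF j] vv_herm[OF i]] by auto
    obtain b where b: "?K *\<^sub>v vv j i (-1) = b \<cdot>\<^sub>v (g *\<^sub>v vv j i (-1))"
      using eig[OF vv_carrier vv_xi[OF j] vv_herm[OF i]] by auto
    let ?d = "dd j i"
    have ea: "2 * ?K $$ (m,0) + ?d * ?K $$ (m,i) = a * (2 * g $$ (m,0) + ?d * g $$ (m,i))" if m: "m < 5" for m
    proof -
      have "(?K *\<^sub>v vv j i 1) $ m = (a \<cdot>\<^sub>v (g *\<^sub>v vv j i 1)) $ m" using a by simp
      then show ?thesis using vv_mult[OF Kmap_carrier i m] vv_mult[OF g i m] m g by simp
    qed
    have eb: "2 * ?K $$ (m,0) - ?d * ?K $$ (m,i) = b * (2 * g $$ (m,0) - ?d * g $$ (m,i))" if m: "m < 5" for m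
    proof -
      have "(?K *\<^sub>v vv j i (-1)) $ m = (b \<cdot>\<^sub>v (g *\<^sub>v vv j i (-1))) $ m" using b by simp
      then show ?thesis using vv_mult[OF Kmap_carrier i m] vv_mult[OF g i m] m g by simp
    qed
    have "g $$ (m,0) * (4 * mu - 2 * a - 2 * b) + g $$ (m,i) * (- (?d * (a - b))) = 0" if m: "m < 5" for m
    proof -
      have "g $$ (m,0) * (4 * mu - 2 * a - 2 * b) + g $$ (m,i) * (- (?d * (a - b)))
          = 4 * (mu * g $$ (m,0)) - (a * (2 * g $$ (m,0) + ?d * g $$ (m,i)) + b * (2 * g $$ (m,0) - ?d * g $$ (m,i)))"
        by (simp add: algebra_simps)
      also have "\<dots> = 4 * ?K $$ (m,0) - ((2 * ?K $$ (m,0) + ?d * ?K $$ (m,i)) + (2 * ?K $$ (m,0) - ?d * ?K $$ (m,i)))"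
        using ea[OF m] eb[OF m] c0[OF m] by simp
      also have "\<dots> = 0" by (simp add: algebra_simps)
      finally show ?thesis .
    qed
    then have pq: "4 * mu - 2 * a - 2 * b = 0 \<and> - (?d * (a - b)) = 0"
      using inj_cols[OF g N i] by blast
    then have "a = b" using dd_nz[of j i] by simp
    then have "a = mu" using pq by simp
    then have "?d * ?K $$ (k,i) = ?d * (mu * g $$ (k,i))"
    proof -
      assume am: "a = mu"
      have "?d * ?K $$ (k,i) = (2 * ?K $$ (k,0) + ?d * ?K $$ (k,i)) - 2 * ?K $$ (k,0)" by simp
      also have "\<dots> = mu * (2 * g $$ (k,0) + ?d * g $$ (k,i)) - 2 * (mu * g $$ (k,0))"
        using ea[OF k] c0[OF k] am by simp
      also have "\<dots> = ?d * (mu * g $$ (k,i))" by (simp add: algebra_simps)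
      finally show ?thesis .
    qed
    then show ?thesis using dd_nz[of j i] by simp
  qed
  have "?K = mu \<cdot>\<^sub>m g"
  proof (rule eq_matI)
    fix k i assume "k < dim_row (mu \<cdot>\<^sub>m g)" "i < dim_col (mu \<cdot>\<^sub>m g)"
    then have k: "k < 5" and i: "i < 5" using g by auto
    show "?K $$ (k,i) = (mu \<cdot>\<^sub>m g) $$ (k,i)"
      using c0[OF k] ci[OF _ i k] k i g by (cases "i = 0") auto
  qed (use g in auto)
  then show ?thesis by blast
qed


lemma mu_unit:
  assumes j: "j \<le> 4" and g: "g \<in> Eis_mat" and N: "N \<in> Eis_mat" "N * g = 1\<^sub>m 5" "g * N = 1\<^sub>m 5"
    and K: "Kmap j g = mu \<cdot>\<^sub>m g"
  shows "mu \<in> Eis_units"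
proof -
  have cg: "g \<in> carrier_mat 5 5" and cN: "N \<in> carrier_mat 5 5" using g N unfolding Eis_mat_def by auto
  have "Kmap j g * N = mu \<cdot>\<^sub>m (g * N)" using K cg cN by (simp add: mult_smult_assoc_mat[of _ 5 5 _ 5])
  then have KN: "Kmap j g * N = mu \<cdot>\<^sub>m 1\<^sub>m 5" using N by simp
  have "Kmap j g * N \<in> Eis_mat" using Eis_mat_mult[OF Kmap_Eis[OF g] N(1)] .
  then have "(Kmap j g * N) $$ (0,0) \<in> Eis" unfolding Eis_mat_def by auto
  then have mE: "mu \<in> Eis" using KN by simp
  obtain k where k: "k < 5" "g $$ (k,0) \<noteq> 0"
  proof (rule ccontr)
    assume "\<not> thesis"
    then have z: "\<And>k. k < 5 \<Longrightarrow> g $$ (k,0) = 0" using that by blast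
    have "(N * g) $$ (0,0) = (\<Sum>l<5. N $$ (0,l) * g $$ (l,0))" using mult5[OF cN cg] by simp
    also have "\<dots> = 0" using z by simp
    finally show False using N(2) by simp
  qed
  have e: "sg j k * sg j 0 * cnj (g $$ (k,0)) = mu * g $$ (k,0)"
    using K k(1) cg by (metis Kmap_idx carrier_matD(1) carrier_matD(2) index_smult_mat(1) zero_less_numeral)
  have "g $$ (k,0) * cnj (g $$ (k,0)) = (sg j k * sg j 0 * cnj (g $$ (k,0))) * cnj (sg j k * sg j 0 * cnj (g $$ (k,0)))"
    using sg_sq[of j k] sg_sq[of j 0] by (simp add: cnj_sg mult_ac)
  also have "\<dots> = (mu * cnj mu) * (g $$ (k,0) * cnj (g $$ (k,0)))" using e by (simp add: mult_ac)
  finally have eq: "g $$ (k,0) * cnj (g $$ (k,0)) = (mu * cnj mu) * (g $$ (k,0) * cnj (g $$ (k,0)))" .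
  have nz: "g $$ (k,0) * cnj (g $$ (k,0)) \<noteq> 0" using k(2) by simp
  have "(mu * cnj mu - 1) * (g $$ (k,0) * cnj (g $$ (k,0))) = 0" using eq by (simp add: algebra_simps)
  then have "mu * cnj mu = 1" using nz by simp
  then show ?thesis unfolding Eis_units_def using mE Eis_cnj[OF mE] by auto
qed

lemma extract_int:
  assumes "\<And>i k. i < 5 \<Longrightarrow> k < 5 \<Longrightarrow> \<exists>n. f i k = (of_int n :: complex)"
  shows "\<exists>P \<in> carrier_mat 5 5. \<forall>i<5. \<forall>k<5. f i k = of_int (P $$ (i,k))"
proof -
  define P where "P = mat 5 5 (\<lambda>(i,k). SOME n. f i k = (of_int n :: complex))"
  have "\<forall>i<5. \<forall>k<5. f i k = of_int (P $$ (i,k))"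
    unfolding P_def using assms by (auto intro: someI_ex)
  moreover have "P \<in> carrier_mat 5 5" unfolding P_def by simp
  ultimately show ?thesis by blast
qed

lemma extract_plus:
  assumes j: "j \<le> 4" and A: "A \<in> Eis_mat" and K: "Kmap j A = A"
  shows "\<exists>M \<in> carrier_mat 5 5. cmat j M = A"
proof -
  have cA: "A \<in> carrier_mat 5 5" using A unfolding Eis_mat_def by auto
  have "\<exists>n. A $$ (i,k) * dd j k / dd j i = of_int n" if ik: "i < 5" "k < 5" for i k
  proof -
    have r: "sg j i * sg j k * cnj (A $$ (i,k)) = A $$ (i,k)" using K ik cA
      by (metis Kmap_idx carrier_matD(1) carrier_matD(2))
    have AE: "A $$ (i,k) \<in> Eis" using A ik unfolding Eis_mat_def by auto
    show ?thesis
    proof (cases "i < 5 - j \<longleftrightarrow> k < 5 - j")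
      case True
      then have "cnj (A $$ (i,k)) = A $$ (i,k)" using r by (auto simp: sg_def)
      then obtain n where "A $$ (i,k) = of_int n" using Eis_real[OF AE] by blast
      then show ?thesis using True theta_nz by (auto simp: dd_def)
    next
      case False
      then have "sg j i * sg j k = -1" by (auto simp: sg_def)
      then have "- cnj (A $$ (i,k)) = A $$ (i,k)" using r by simp
      then have "cnj (A $$ (i,k)) = - A $$ (i,k)" by (metis minus_minus)
      then obtain n where n: "A $$ (i,k) = of_int n * theta" using Eis_imag[OF AE] by blast
      show ?thesis
      proof (cases "i < 5 - j")
        case True
        then have "A $$ (i,k) * dd j k / dd j i = of_int (-3 * n)" using False n theta_sq
          by (auto simp: dd_def mult.assoc)
        then show ?thesis by blast
      next
        case F2: False
        then have "A $$ (i,k) * dd j k / dd j i = of_int n" using False n theta_nz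
          by (auto simp: dd_def)
        then show ?thesis by blast
      qed
    qed
  qed
  then obtain M where M: "M \<in> carrier_mat 5 5" "\<forall>i<5. \<forall>k<5. A $$ (i,k) * dd j k / dd j i = of_int (M $$ (i,k))"
    using extract_int[of "\<lambda>i k. A $$ (i,k) * dd j k / dd j i"] by blast
  have "cmat j M = A"
  proof (rule eq_matI)
    fix i k assume "i < dim_row A" "k < dim_col A"
    then have ik: "i < 5" "k < 5" using cA by auto
    have e: "A $$ (i,k) * dd j k / dd j i = of_int (M $$ (i,k))" using M(2) ik by auto
    show "cmat j M $$ (i,k) = A $$ (i,k)"
      unfolding cmat_idx[OF ik] e[symmetric] using dd_nz[of j i] dd_nz[of j k] by (simp add: field_simps)
  qed (use cA in auto)
  then show ?thesis using M(1) by blast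
qed

definition aa :: "nat \<Rightarrow> nat \<Rightarrow> complex" where "aa j i = (if i < 5 - j then theta else 1)"

lemma extract_minus:
  assumes j: "j \<le> 4" and A: "A \<in> Eis_mat" and K: "Kmap j A = - A"
  shows "\<exists>P \<in> carrier_mat 5 5. \<forall>i<5. \<forall>k<5. A $$ (i,k) * dd j k = aa j i * of_int (P $$ (i,k))"
proof -
  have cA: "A \<in> carrier_mat 5 5" using A unfolding Eis_mat_def by auto
  have anz: "aa j i \<noteq> 0" for i unfolding aa_def using theta_nz by auto
  have "\<exists>n. A $$ (i,k) * dd j k / aa j i = of_int n" if ik: "i < 5" "k < 5" for i k
  proof -
    have r: "sg j i * sg j k * cnj (A $$ (i,k)) = - A $$ (i,k)" using K ik cA
      by (metis Kmap_idx carrier_matD(1) carrier_matD(2) index_uminus_mat(1))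
    have AE: "A $$ (i,k) \<in> Eis" using A ik unfolding Eis_mat_def by auto
    show ?thesis
    proof (cases "i < 5 - j \<longleftrightarrow> k < 5 - j")
      case True
      then have "cnj (A $$ (i,k)) = - A $$ (i,k)" using r by (auto simp: sg_def)
      then obtain n where n: "A $$ (i,k) = of_int n * theta" using Eis_imag[OF AE] by blast
      show ?thesis
      proof (cases "i < 5 - j")
        case True2: True
        then have "A $$ (i,k) * dd j k / aa j i = of_int n" using True n theta_nz
          by (auto simp: dd_def aa_def)
        then show ?thesis by blast
      next
        case F2: False
        then have "A $$ (i,k) * dd j k / aa j i = of_int (-3 * n)" using True n theta_sq
          by (auto simp: dd_def aa_def mult.assoc)
        then show ?thesis by blast
      qed
    next
      case False
      then have "cnj (A $$ (i,k)) = A $$ (i,k)" using r by (auto simp: sg_def)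
      then obtain n where n: "A $$ (i,k) = of_int n" using Eis_real[OF AE] by blast
      then have "A $$ (i,k) * dd j k / aa j i = of_int n" using False theta_nz
        by (auto simp: dd_def aa_def)
      then show ?thesis by blast
    qed
  qed
  then obtain P where P: "P \<in> carrier_mat 5 5" "\<forall>i<5. \<forall>k<5. A $$ (i,k) * dd j k / aa j i = of_int (P $$ (i,k))"
    using extract_int[of "\<lambda>i k. A $$ (i,k) * dd j k / aa j i"] by blast
  have "\<forall>i<5. \<forall>k<5. A $$ (i,k) * dd j k = aa j i * of_int (P $$ (i,k))"
    using P(2) anz by (auto simp: field_simps)
  then show ?thesis using P(1) by blast
qed

lemma herm_weights:
  fixes P :: "int mat" and y :: "int vec"
  assumes A: "A \<in> carrier_mat 5 5" and hA: "\<forall>x \<in> Lambda. \<forall>y \<in> Lambda. herm (A *\<^sub>v x) (A *\<^sub>v y) = herm x y"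
    and P: "P \<in> carrier_mat 5 5" and w: "\<And>i k. i < 5 \<Longrightarrow> k < 5 \<Longrightarrow> A $$ (i,k) * dd j k = ww i * of_int (P $$ (i,k))"
    and y: "y \<in> carrier_vec 5"
  shows "(\<Sum>i<5. hh i * (ww i * cnj (ww i)) * of_int (((P *\<^sub>v y) $ i)^2)) =
         (\<Sum>i<5. hh i * (dd j i * cnj (dd j i)) * of_int ((y $ i)^2))"
proof -
  define z where "z = vec 5 (\<lambda>k. dd j k * of_int (y $ k))"
  have zc: "z \<in> carrier_vec 5" unfolding z_def by simp
  have zL: "z \<in> Lambda" unfolding Lambda_def z_def using Eis_mult[OF Eis_dd Eis_int] by auto
  have Az: "(A *\<^sub>v z) $ i = ww i * of_int ((P *\<^sub>v y) $ i)" if i: "i < 5" for i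
  proof -
    have "(A *\<^sub>v z) $ i = (\<Sum>k<5. A $$ (i,k) * (dd j k * of_int (y $ k)))"
      using multv5[OF A zc i] by (simp add: z_def)
    also have "\<dots> = (\<Sum>k<5. ww i * (of_int (P $$ (i,k)) * of_int (y $ k)))"
      using w i by (intro sum.cong[OF refl]) (simp add: mult.assoc[symmetric])
    also have "\<dots> = ww i * of_int (\<Sum>k<5. P $$ (i,k) * y $ k)" by (simp add: sum_distrib_left)
    also have "\<dots> = ww i * of_int ((P *\<^sub>v y) $ i)" using multv5[OF P y i] by simp
    finally show ?thesis .
  qed
  have "herm (A *\<^sub>v z) (A *\<^sub>v z) = (\<Sum>i<5. hh i * (ww i * cnj (ww i)) * of_int (((P *\<^sub>v y) $ i)^2))"
    unfolding herm_hh using Az by (intro sum.cong[OF refl]) (simp add: power2_eq_square mult_ac)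
  moreover have "herm z z = (\<Sum>i<5. hh i * (dd j i * cnj (dd j i)) * of_int ((y $ i)^2))"
    unfolding herm_hh z_def by (intro sum.cong[OF refl]) (simp add: power2_eq_square mult_ac)
  ultimately show ?thesis using hA zL by simp
qed


lemma det_diag5:
  fixes f :: "nat \<Rightarrow> int"
  shows "det (mat 5 5 (\<lambda>(i,k). if i = k then f i else 0)) = f 0 * f 1 * f 2 * f 3 * f 4"
proof -
  let ?D = "mat 5 5 (\<lambda>(i,k). if i = k then f i else 0)"
  have "upper_triangular ?D" unfolding upper_triangular_def by auto
  then have "det ?D = prod_list (diag_mat ?D)" using det_upper_triangular[of ?D 5] by auto
  also have "\<dots> = f 0 * f 1 * f 2 * f 3 * f 4"
    by (simp add: diag_mat_def upt_rec numeral_eq_Suc mult_ac)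
  finally show ?thesis .
qed

lemma sq_ne3: "(d::int) * d \<noteq> 3"
proof
  assume h: "d * d = 3"
  then have h2: "d^2 = 3" by (simp add: power2_eq_square)
  show False
  proof (cases "\<bar>d\<bar> \<le> \<bar>1\<bar>")
    case True
    then have "d^2 \<le> 1^2" using abs_le_square_iff[of d 1] by blast
    then show False using h2 by simp
  next
    case False
    then have "\<bar>2\<bar> \<le> \<bar>d\<bar>" by simp
    then have "2^2 \<le> d^2" using abs_le_square_iff[of 2 d] by blast
    then show False using h2 by simp
  qed
qed

lemma sq_ne27: "(d::int) * d \<noteq> 27"
proof
  assume h: "d * d = 27"
  then have h2: "d^2 = 27" by (simp add: power2_eq_square)
  show False
  proof (cases "\<bar>d\<bar> \<le> \<bar>5\<bar>")
    case True
    then have "d^2 \<le> 5^2" using abs_le_square_iff[of d 5] by blast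
    then show False using h2 by simp
  next
    case False
    then have "\<bar>6\<bar> \<le> \<bar>d\<bar>" by simp
    then have "6^2 \<le> d^2" using abs_le_square_iff[of 6 d] by blast
    then show False using h2 by simp
  qed
qed

definition cc' :: "nat \<Rightarrow> nat \<Rightarrow> int" where
  "cc' j i = (if i = 0 then -3 else if i < 5 - j then 3 else 1)"

lemma hh_aa: "j \<le> 4 \<Longrightarrow> hh i * (aa j i * cnj (aa j i)) = of_int (cc' j i)"
  unfolding hh_def aa_def cc'_def using cnj_theta theta_sq by auto

lemma hh_dd': "j \<le> 4 \<Longrightarrow> hh i * (dd j i * cnj (dd j i)) = of_int (psi_coeff j i)"
  using hh_dd[of j i] by (simp add: mult.assoc)

lemma gram_det:
  fixes P :: "int mat"
  assumes P: "P \<in> carrier_mat 5 5"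
    and G: "\<And>k l. k < 5 \<Longrightarrow> l < 5 \<Longrightarrow> (\<Sum>i<5. c' i * P $$ (i,k) * P $$ (i,l)) = (if k = l then c k else 0)"
  shows "det P * det P * (c' 0 * c' 1 * c' 2 * c' 3 * c' 4) = c 0 * c 1 * c 2 * c 3 * c 4"
proof -
  define D' where "D' = mat 5 5 (\<lambda>(i,k). if i = k then c' i else 0)"
  define D where "D = mat 5 5 (\<lambda>(i,k). if i = k then c i else 0)"
  have cD': "D' \<in> carrier_mat 5 5" and cD: "D \<in> carrier_mat 5 5" unfolding D'_def D_def by auto
  have cT: "transpose_mat P \<in> carrier_mat 5 5" using P by simp
  have TD: "(transpose_mat P * D') $$ (k,m) = P $$ (m,k) * c' m" if "k < 5" "m < 5" for k m
  proof -
    have "(transpose_mat P * D') $$ (k,m) = (\<Sum>i<5. P $$ (i,k) * D' $$ (i,m))"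
      using mult5[OF cT cD' that] P that by simp
    also have "\<dots> = (\<Sum>i<5. (if i = m then P $$ (m,k) * c' m else 0))"
      using that by (intro sum.cong[OF refl]) (auto simp: D'_def)
    also have "\<dots> = P $$ (m,k) * c' m" using sum5_delta[OF that(2), of "\<lambda>_. P $$ (m,k) * c' m"] by simp
    finally show ?thesis .
  qed
  have eq: "transpose_mat P * D' * P = D"
  proof (rule eq_matI)
    fix k l assume "k < dim_row D" "l < dim_col D"
    then have kl: "k < 5" "l < 5" using cD by auto
    have "(transpose_mat P * D' * P) $$ (k,l) = (\<Sum>m<5. (transpose_mat P * D') $$ (k,m) * P $$ (m,l))"
      using mult5[OF mult_carrier_mat[OF cT cD'] P kl] .
    also have "\<dots> = (\<Sum>m<5. c' m * P $$ (m,k) * P $$ (m,l))"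
      using TD kl by (intro sum.cong[OF refl]) (simp add: mult_ac)
    also have "\<dots> = D $$ (k,l)" using G[OF kl] kl by (simp add: D_def)
    finally show "(transpose_mat P * D' * P) $$ (k,l) = D $$ (k,l)" .
  qed (use cT cD' P cD in auto)
  have "det D = det (transpose_mat P * D') * det P"
    using eq det_mult[OF mult_carrier_mat[OF cT cD'] P] by simp
  also have "\<dots> = det P * det D' * det P"
    using det_mult[OF cT cD'] det_transpose[OF P] by simp
  finally have "det D = det P * det P * det D'" by (simp add: mult_ac)
  then show ?thesis unfolding D_def D'_def det_diag5 by simp
qed

lemma minus_contra:
  assumes j: "j \<le> 4" and A: "A \<in> Gamma_carrier" and K: "Kmap j A = - A"
  shows False
proof -
  have AE: "A \<in> Eis_mat" and cA: "A \<in> carrier_mat 5 5" using A unfolding Gamma_carrier_def Eis_mat_def by auto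
  have hA: "\<forall>x \<in> Lambda. \<forall>y \<in> Lambda. herm (A *\<^sub>v x) (A *\<^sub>v y) = herm x y"
    using A unfolding Gamma_carrier_def by auto
  obtain P where P: "P \<in> carrier_mat 5 5" "\<forall>i<5. \<forall>k<5. A $$ (i,k) * dd j k = aa j i * of_int (P $$ (i,k))"
    using extract_minus[OF j AE K] by blast
  have Q: "(\<Sum>i<5. cc' j i * ((P *\<^sub>v y) $ i)^2) = (\<Sum>i<5. psi_coeff j i * (y $ i)^2)"
    if y: "y \<in> carrier_vec 5" for y
  proof -
    have "(\<Sum>i<5. hh i * (aa j i * cnj (aa j i)) * of_int (((P *\<^sub>v y) $ i)^2)) =
         (\<Sum>i<5. hh i * (dd j i * cnj (dd j i)) * of_int ((y $ i)^2))"
      using herm_weights[OF cA hA P(1) _ y, of j "aa j"] P(2) by blast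
    then have "(of_int (\<Sum>i<5. cc' j i * ((P *\<^sub>v y) $ i)^2) :: complex) = of_int (\<Sum>i<5. psi_coeff j i * (y $ i)^2)"
      using hh_aa[OF j] hh_dd'[OF j] by simp
    then show ?thesis by (simp only: of_int_eq_iff)
  qed
  have G: "(\<Sum>i<5. cc' j i * P $$ (i,k) * P $$ (i,l)) = (if k = l then psi_coeff j k else 0)"
    if "k < 5" "l < 5" for k l
    using polar[OF P(1) Q that] by simp
  have D: "det P * det P * (cc' j 0 * cc' j 1 * cc' j 2 * cc' j 3 * cc' j 4)
      = psi_coeff j 0 * psi_coeff j 1 * psi_coeff j 2 * psi_coeff j 3 * psi_coeff j 4"
    using gram_det[OF P(1) G] by simp
  define d where "d = det P * det P"
  have "j = 0 \<or> j = 1 \<or> j = 2 \<or> j = 3 \<or> j = 4" using j by auto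
  then show False
  proof (elim disjE)
    assume "j = 0" then have "d * 243 = 1" using D unfolding d_def by (simp add: cc'_def psi_coeff_def)
    then show False by presburger
  next
    assume "j = 1" then have "d * 81 = 3" using D unfolding d_def by (simp add: cc'_def psi_coeff_def)
    then show False by presburger
  next
    assume "j = 2" then have "d * 27 = 9" using D unfolding d_def by (simp add: cc'_def psi_coeff_def)
    then show False by presburger
  next
    assume "j = 3" then have "d * 9 = 27" using D unfolding d_def by (simp add: cc'_def psi_coeff_def)
    then have "det P * det P = 3" unfolding d_def by simp
    then show False using sq_ne3 by blast
  next
    assume "j = 4" then have "d * 3 = 81" using D unfolding d_def by (simp add: cc'_def psi_coeff_def)
    then have "det P * det P = 27" unfolding d_def by simp
    then show False using sq_ne27 by blast
  qed
qed


lemma Kmap_smult: "A \<in> carrier_mat 5 5 \<Longrightarrow> Kmap j (t \<cdot>\<^sub>m A) = cnj t \<cdot>\<^sub>m Kmap j A"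
  by (rule eq_matI) (auto simp: Kmap_idx mult_ac)

lemma Eis_mat_smult: "t \<in> Eis \<Longrightarrow> A \<in> Eis_mat \<Longrightarrow> t \<cdot>\<^sub>m A \<in> Eis_mat"
  unfolding Eis_mat_def by (auto intro!: Eis_mult)

lemma Phi_surj:
  assumes j: "j \<le> 4" and C: "C \<in> Stab j"
  shows "\<exists>M \<in> carrier (O_Psi j). Phi j M = C"
proof -
  interpret G: group Gamma by (rule group_Gamma)
  have Cc: "C \<in> rcosets\<^bsub>Gamma\<^esub> unit_scalars" using C unfolding Stab_def carrier_PGamma by auto
  then obtain g where g: "g \<in> Gamma_carrier" "C = unit_scalars #>\<^bsub>Gamma\<^esub> g"
    unfolding RCOSETS_def carrier_Gamma by auto
  have gC: "g \<in> C" using G.rcos_self[OF _ subgroup_U] g carrier_Gamma by simp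
  have st: "act_line g ` H4 j = H4 j" using C gC unfolding Stab_def by auto
  have cg: "g \<in> carrier_mat 5 5" and gE: "g \<in> Eis_mat" using g(1) unfolding Gamma_carrier_def Eis_mat_def by auto
  obtain N where N: "N \<in> Eis_mat" "N * g = 1\<^sub>m 5" "g * N = 1\<^sub>m 5" using g(1) unfolding Gamma_carrier_def by auto
  have cN: "N \<in> carrier_mat 5 5" using N unfolding Eis_mat_def by auto
  have eig: "\<exists>lam. Kmap j g *\<^sub>v v = lam \<cdot>\<^sub>v (g *\<^sub>v v)"
    if "v \<in> carrier_vec 5" "xi j v = v" "Re (herm v v) < 0" for v
    using stab_eig[OF cg st that] Kmap_vec[OF cg that(1)] that(2) by simp
  obtain mu where mu: "Kmap j g = mu \<cdot>\<^sub>m g" using mu_exists[OF j cg cN N(2) eig] by blast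
  have muU: "mu \<in> Eis_units" using mu_unit[OF j gE N mu] .
  obtain t where t: "t \<in> Eis_units" "t * t = mu \<or> t * t = - mu" using Eis_unit_half[OF muU] by blast
  have tn: "cnj t * t = 1" using Eis_unit_norm[OF t(1)] by (simp add: mult.commute)
  have tE: "t \<in> Eis" using t(1) unfolding Eis_units_def by auto
  define g' where "g' = t \<cdot>\<^sub>m g"
  have g'eq: "(t \<cdot>\<^sub>m 1\<^sub>m 5) * g = g'" unfolding g'_def using smult_one_mult[OF cg] .
  have g'G: "g' \<in> Gamma_carrier" using Gamma_carrier_mult[OF scalar_in_Gamma[OF t(1)] g(1)] g'eq by simp
  have cg': "g' \<in> carrier_mat 5 5" unfolding g'_def using cg by simp
  have g'in: "g' \<in> unit_scalars #>\<^bsub>Gamma\<^esub> g"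
    unfolding r_coset_def mult_Gamma unit_scalars_def using t(1) g'eq by blast
  have Cg': "C = unit_scalars #>\<^bsub>Gamma\<^esub> g'"
    using G.repr_independence[OF g'in _ subgroup_U] g carrier_Gamma by simp
  have Kg': "Kmap j g' = (cnj t * mu) \<cdot>\<^sub>m g"
    unfolding g'_def using Kmap_smult[OF cg] mu smult_smult_mat by simp
  show ?thesis using t(2)
  proof
    assume tt: "t * t = mu"
    have "cnj t * mu = t" using tt tn by (metis mult.assoc mult_1)
    then have Kp: "Kmap j g' = g'" using Kg' unfolding g'_def by simp
    have g'E: "g' \<in> Eis_mat" unfolding g'_def using Eis_mat_smult[OF tE gE] .
    define N' where "N' = cnj t \<cdot>\<^sub>m N"
    have cN': "N' \<in> carrier_mat 5 5" unfolding N'_def using cN by simp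
    have N'E: "N' \<in> Eis_mat" unfolding N'_def using Eis_mat_smult[OF Eis_cnj[OF tE] N(1)] .
    have tn': "t * cnj t = 1" using tn by (simp add: mult.commute)
    have N'g': "N' * g' = 1\<^sub>m 5" unfolding N'_def g'_def
      using cN cg N(2) tn tn' by (simp add: mult_smult_assoc_mat[of _ 5 5 _ 5] mult_smult_distrib[of _ 5 5 _ 5] smult_smult_mat so)
    have g'N': "g' * N' = 1\<^sub>m 5" unfolding N'_def g'_def
      using cN cg N(3) tn by (simp add: mult_smult_assoc_mat[of _ 5 5 _ 5] mult_smult_distrib[of _ 5 5 _ 5] smult_smult_mat so mult.commute)
    have KN': "Kmap j N' = N'" using Kmap_inv[OF cg' cN' N'g' g'N' Kp] .
    obtain M where M: "M \<in> carrier_mat 5 5" "cmat j M = g'" using extract_plus[OF j g'E Kp] by blast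
    obtain M' where M': "M' \<in> carrier_mat 5 5" "cmat j M' = N'" using extract_plus[OF j N'E KN'] by blast
    have "cmat j (M' * M) = cmat j (1\<^sub>m 5)" using cmat_mult[OF M'(1) M(1)] M M' N'g' cmat_one by simp
    then have i1: "M' * M = 1\<^sub>m 5" using cmat_inj[of "M' * M" "1\<^sub>m 5"] M M' by simp
    have "cmat j (M * M') = cmat j (1\<^sub>m 5)" using cmat_mult[OF M(1) M'(1)] M M' g'N' cmat_one by simp
    then have i2: "M * M' = 1\<^sub>m 5" using cmat_inj[of "M * M'" "1\<^sub>m 5"] M M' by simp
    have hA: "\<forall>x \<in> Lambda. \<forall>y \<in> Lambda. herm (g' *\<^sub>v x) (g' *\<^sub>v y) = herm x y"
      using g'G unfolding Gamma_carrier_def by auto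
    have w: "g' $$ (i,k) * dd j k = dd j i * of_int (M $$ (i,k))" if "i < 5" "k < 5" for i k
      using M(2)[symmetric] that dd_nz[of j k] by (simp add: cmat_idx)
    have "Psi j (M *\<^sub>v y) = Psi j y" if y: "y \<in> carrier_vec 5" for y
    proof -
      have "(\<Sum>i<5. hh i * (dd j i * cnj (dd j i)) * of_int (((M *\<^sub>v y) $ i)^2)) =
         (\<Sum>i<5. hh i * (dd j i * cnj (dd j i)) * of_int ((y $ i)^2))"
        using herm_weights[OF cg' hA M(1) w y] by blast
      then have "(of_int (Psi j (M *\<^sub>v y)) :: complex) = of_int (Psi j y)"
        unfolding Psi_def using hh_dd'[OF j] by simp
      then show ?thesis by (simp only: of_int_eq_iff)
    qed
    then have MO: "M \<in> carrier (O_Psi j)" unfolding carrier_O using M(1) M'(1) i1 i2 by blast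
    have "Phi j M = C" unfolding Phi_def M(2) Cg' ..
    then show ?thesis using MO by blast
  next
    assume tt: "t * t = - mu"
    have "cnj t * mu = - t" using tt tn by (metis mult.assoc mult_1 mult_minus_right minus_minus)
    moreover have "(- t) \<cdot>\<^sub>m g = - (t \<cdot>\<^sub>m g)" by (rule eq_matI) auto
    ultimately have "Kmap j g' = - g'" using Kg' unfolding g'_def by simp
    then show ?thesis using minus_contra[OF j g'G] by blast
  qed
qed


theorem theorem5p1:
  fixes j :: nat
  assumes "j \<le> 4"
  shows "PGammaR j \<cong> PO_Psi j"
proof -
  have gh: "group_hom (O_Psi j) (PGammaR j) (Phi j)"
    unfolding group_hom_def group_hom_axioms_def using group_O group_PGammaR Phi_hom[OF assms] by auto
  have surj: "Phi j ` carrier (O_Psi j) = carrier (PGammaR j)"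
  proof
    show "Phi j ` carrier (O_Psi j) \<subseteq> carrier (PGammaR j)"
      using Phi_Stab[OF assms] carrier_PGammaR by auto
    show "carrier (PGammaR j) \<subseteq> Phi j ` carrier (O_Psi j)"
      using Phi_surj[OF assms] carrier_PGammaR by force
  qed
  have iso: "O_Psi j Mod kernel (O_Psi j) (PGammaR j) (Phi j) \<cong> PGammaR j"
    using group_hom.FactGroup_iso[OF gh surj] .
  have grp: "group (O_Psi j Mod kernel (O_Psi j) (PGammaR j) (Phi j))"
    using normal.factorgroup_is_group[OF group_hom.normal_kernel[OF gh]] .
  have "PGammaR j \<cong> O_Psi j Mod kernel (O_Psi j) (PGammaR j) (Phi j)"
    using group.iso_sym[OF grp iso] .
  then show ?thesis unfolding PO_Psi_def Phi_kernel[OF assms] .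
qed


end
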